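(* Let $(\mathbf Z_n,\mathbf A_{n\times n})$ be generated from the stochastic block model with parameters $(\pi,\rho_nS)$, with $\rho_n\to0$ and $n\rho_n\to\infty$ as $n\to\infty$. Then for all $\alpha<\min_a\pi_a$ and all $\delta>0$, \[ |X(\hat{\mathbf z}_n,\mathbf Z_n)-X(\mathbf Z_n,\mathbf Z_n)|<\delta\rho_n \] eventually almost surely as $n\to\infty$, for $\hat{\mathbf z}_n=\hat{\mathbf z}_n^{\mathrm{ML}}$ and $\hat{\mathbf z}_n=\hat{\mathbf z}_n^{\mathrm{ICL}}$ (defined with this $\alpha$). Moreover, $\alpha$ can be taken as a decreasing sequence in $n$, provided $n\rho_n>\frac{4s_{\max}}{\alpha^2\delta^2}$ for $n$ sufficiently large.
   Context: SBM with parameters $(\pi,\rho_nS)$: $k\ge2$ fixed; $\pi$ a probability vector on $[k]$ with all $\pi_a>0$; $S$ a fixed symmetric $k\times k$ matrix with strictly positive entries and no two identical columns, $s_{\max}$ its maximal entry; $P=\rho_nS$. $\mathbf Z_n$ i.i.d. with law $\pi$; given $\mathbf Z_n=\mathbf z_n$, $\mathbf A_{n\times n}$ symmetric, zero diagonal, $A_{ij}$ ($i<j$) independent Bernoulli$(P_{z_iz_j})$. For $\mathbf e_n\in[k]^n$: $n_a(\mathbf e_n)=\#\{i:e_i=a\}$; $n_{ab}=n_an_b$ ($a\ne b$), $n_{aa}=n_a(n_a-1)$; $o_{ab}(\mathbf e_n)=\sum_{i,j}\mathbf 1\{e_i=a,e_j=b\}A_{ij}$; $\tau(x)=x\log x+(1-x)\log(1-x)$.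 $Q_{\mathrm{ML}}(\mathbf e_n)=\frac1{2n^2}\sum_{a,b}n_{ab}\tau(o_{ab}/n_{ab})$; with $\tilde o_{aa}=o_{aa}/2,\tilde n_{aa}=n_{aa}/2$, $\tilde o_{ab}=o_{ab},\tilde n_{ab}=n_{ab}$ ($a\ne b$), $Q_{\mathrm{ICL}}(\mathbf e_n)=\frac1{n^2}\sum_{a\le b}\log\frac{B(\tilde o_{ab}+1/2,\tilde n_{ab}-\tilde o_{ab}+1/2)}{B(1/2,1/2)}$. $\mathcal F(n,\alpha)=\{\mathbf e_n:n_a(\mathbf e_n)\ge\alpha n\ \forall a\}$; $\hat{\mathbf z}_n^{\mathrm{ML}}$, $\hat{\mathbf z}_n^{\mathrm{ICL}}$ maximize $Q_{\mathrm{ML}}$, $Q_{\mathrm{ICL}}$ over $\mathcal F(n,\alpha)$. Confusion matrix $R_{ab}(\mathbf e_n,\mathbf z_n)=\frac1n\sum_i\mathbf 1\{e_i=a,z_i=b\}$; for a nonnegative $k\times k$ matrix $R$, $[P_R]_{ab}=\dfrac{[RPR^T]_{ab}-\delta_{ab}\sum_{i}P_{ii}R_{ai}/n}{[R\mathbf 1]_a([R\mathbf 1]_b-\delta_{ab}/n)}$ ($\delta_{ab}=\mathbf 1\{a=b\}$). Finally $X(\mathbf e_n,\mathbf z_n)=\frac1{2n^2}\sum_{a,b}n_{ab}(\mathbf e_n)\bigl[\tau\bigl(o_{ab}(\mathbf e_n)/n_{ab}(\mathbf e_n)\bigr)-\tau\bigl([P_{R(\mathbf e_n,\mathbf z_n)}]_{ab}\bigr)\bigr]$.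 *)

theory Defs
  imports "HOL-Analysis.Analysis" "HOL-Probability.Probability"
begin

(* Blocks are 0..<k, nodes are 0..<n.  Assignments are functions nat => nat
   (extensional on {0..<n}).  Adjacency matrices are nat => nat => bool. *)

definition tau :: "real \<Rightarrow> real" where
  "tau x = x * ln x + (1 - x) * ln (1 - x)"

definition ncount :: "nat \<Rightarrow> (nat \<Rightarrow> nat) \<Rightarrow> nat \<Rightarrow> real" where
  "ncount n e a = real (card {i\<in>{0..<n}. e i = a})"

definition npair :: "nat \<Rightarrow> (nat \<Rightarrow> nat) \<Rightarrow> nat \<Rightarrow> nat \<Rightarrow> real" where
  "npair n e a b = (if a = b then ncount n e a * (ncount n e a - 1)
                    else ncount n e a * ncount n e b)"

definition ocount :: "nat \<Rightarrow> (nat \<Rightarrow> nat \<Rightarrow> bool) \<Rightarrow> (nat \<Rightarrow> nat) \<Rightarrow> nat \<Rightarrow> nat \<Rightarrow> real" where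
  "ocount n A e a b = (\<Sum>i<n. \<Sum>j<n. if e i = a \<and> e j = b \<and> A i j then 1 else 0)"

definition Q_ML :: "nat \<Rightarrow> nat \<Rightarrow> (nat \<Rightarrow> nat \<Rightarrow> bool) \<Rightarrow> (nat \<Rightarrow> nat) \<Rightarrow> real" where
  "Q_ML k n A e = 1 / (2 * real n ^ 2) *
     (\<Sum>a<k. \<Sum>b<k. npair n e a b * tau (ocount n A e a b / npair n e a b))"

definition otilde :: "nat \<Rightarrow> (nat \<Rightarrow> nat \<Rightarrow> bool) \<Rightarrow> (nat \<Rightarrow> nat) \<Rightarrow> nat \<Rightarrow> nat \<Rightarrow> real" where
  "otilde n A e a b = (if a = b then ocount n A e a b / 2 else ocount n A e a b)"

definition ntilde :: "nat \<Rightarrow> (nat \<Rightarrow> nat) \<Rightarrow> nat \<Rightarrow> nat \<Rightarrow> real" where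
  "ntilde n e a b = (if a = b then npair n e a b / 2 else npair n e a b)"

definition Q_ICL :: "nat \<Rightarrow> nat \<Rightarrow> (nat \<Rightarrow> nat \<Rightarrow> bool) \<Rightarrow> (nat \<Rightarrow> nat) \<Rightarrow> real" where
  "Q_ICL k n A e = 1 / real n ^ 2 *
     (\<Sum>(a,b)\<in>{(a,b). a \<le> b \<and> b < k}.
        ln ((Beta :: real \<Rightarrow> real \<Rightarrow> real) (otilde n A e a b + 1/2) (ntilde n e a b - otilde n A e a b + 1/2)
            / (Beta :: real \<Rightarrow> real \<Rightarrow> real) (1/2) (1/2)))"

definition Fset :: "nat \<Rightarrow> nat \<Rightarrow> real \<Rightarrow> (nat \<Rightarrow> nat) set" where
  "Fset k n \<alpha> = {e \<in> {0..<n} \<rightarrow>\<^sub>E {0..<k}. \<forall>a<k. ncount n e a \<ge> \<alpha> * real n}"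

definition is_ML_est :: "nat \<Rightarrow> real \<Rightarrow> nat \<Rightarrow> (nat \<Rightarrow> nat \<Rightarrow> bool) \<Rightarrow> (nat \<Rightarrow> nat) \<Rightarrow> bool" where
  "is_ML_est k \<alpha> n A e \<longleftrightarrow> e \<in> Fset k n \<alpha> \<and> (\<forall>e'\<in>Fset k n \<alpha>. Q_ML k n A e' \<le> Q_ML k n A e)"

definition is_ICL_est :: "nat \<Rightarrow> real \<Rightarrow> nat \<Rightarrow> (nat \<Rightarrow> nat \<Rightarrow> bool) \<Rightarrow> (nat \<Rightarrow> nat) \<Rightarrow> bool" where
  "is_ICL_est k \<alpha> n A e \<longleftrightarrow> e \<in> Fset k n \<alpha> \<and> (\<forall>e'\<in>Fset k n \<alpha>. Q_ICL k n A e' \<le> Q_ICL k n A e)"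

definition Rconf :: "nat \<Rightarrow> (nat \<Rightarrow> nat) \<Rightarrow> (nat \<Rightarrow> nat) \<Rightarrow> nat \<Rightarrow> nat \<Rightarrow> real" where
  "Rconf n e z a b = real (card {i\<in>{0..<n}. e i = a \<and> z i = b}) / real n"

definition PR :: "nat \<Rightarrow> nat \<Rightarrow> (nat \<Rightarrow> nat \<Rightarrow> real) \<Rightarrow> (nat \<Rightarrow> nat \<Rightarrow> real) \<Rightarrow> nat \<Rightarrow> nat \<Rightarrow> real" where
  "PR k n P R a b =
     ((\<Sum>c<k. \<Sum>d<k. R a c * P c d * R b d)
        - (if a = b then (\<Sum>c<k. P c c * R a c) / real n else 0))
     / ((\<Sum>c<k. R a c) * ((\<Sum>c<k. R b c) - (if a = b then 1 / real n else 0)))"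

definition Xfun :: "nat \<Rightarrow> nat \<Rightarrow> (nat \<Rightarrow> nat \<Rightarrow> real) \<Rightarrow> (nat \<Rightarrow> nat \<Rightarrow> bool) \<Rightarrow> (nat \<Rightarrow> nat) \<Rightarrow> (nat \<Rightarrow> nat) \<Rightarrow> real" where
  "Xfun k n P A e z = 1 / (2 * real n ^ 2) *
     (\<Sum>a<k. \<Sum>b<k. npair n e a b *
        (tau (ocount n A e a b / npair n e a b) - tau (PR k n P (Rconf n e z) a b)))"

definition sbm_pmf :: "nat pmf \<Rightarrow> (nat \<Rightarrow> nat \<Rightarrow> real) \<Rightarrow> nat \<Rightarrow> ((nat \<Rightarrow> nat) \<times> (nat \<Rightarrow> nat \<Rightarrow> bool)) pmf" where
  "sbm_pmf \<pi> P n =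
     do { z \<leftarrow> Pi_pmf {0..<n} 0 (\<lambda>_. \<pi>);
          U \<leftarrow> Pi_pmf {(i,j). i < j \<and> j < n} False (\<lambda>(i,j). bernoulli_pmf (P (z i) (z j)));
          return_pmf (z, \<lambda>i j. if i < j then U (i,j) else if j < i then U (j,i) else False) }"

end

theory Submission
  imports Defs
begin

lemma exp_le_quad_neg:
  fixes y :: real assumes "y \<le> 0" shows "exp y \<le> 1 + y + y\<^sup>2"
proof -
  have "\<forall>x. y \<le> x \<and> x \<le> 0 \<longrightarrow> (\<lambda>t. 1 + t + t\<^sup>2 - exp t) x \<le> (\<lambda>t. 1 + t + t\<^sup>2 - exp t) y"
  proof (intro allI impI)
    fix x assume x: "y \<le> x \<and> x \<le> 0"
    show "(\<lambda>t. 1 + t + t\<^sup>2 - exp t) x \<le> (\<lambda>t. 1 + t + t\<^sup>2 - exp t) y"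
    proof (rule DERIV_nonpos_imp_nonincreasing[of y x])
      show "y \<le> x" using x by simp
      fix t assume t: "y \<le> t" "t \<le> x"
      have "((\<lambda>t. 1 + t + t\<^sup>2 - exp t) has_real_derivative (1 + 2 * t - exp t)) (at t)"
        by (auto intro!: derivative_eq_intros)
      moreover have "1 + 2 * t - exp t \<le> 0"
        using exp_ge_add_one_self[of t] t x by linarith
      ultimately show "\<exists>y. DERIV (\<lambda>t. 1 + t + t\<^sup>2 - exp t) t :> y \<and> y \<le> 0" by blast
    qed
  qed
  then have "1 + 0 + 0\<^sup>2 - exp (0::real) \<le> 1 + y + y\<^sup>2 - exp y" using assms by blast
  then show ?thesis by simp
qed

lemma exp_le_quad:
  fixes y :: real assumes "\<bar>y\<bar> \<le> 1" shows "exp y \<le> 1 + y + y\<^sup>2"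
  using exp_bound[of y] exp_le_quad_neg[of y] assms by (cases "y \<ge> 0") auto

lemma bern_mgf:
  fixes p c :: real
  assumes p: "0 \<le> p" "p \<le> 1" and c: "\<bar>c\<bar> \<le> 1"
  shows "measure_pmf.expectation (bernoulli_pmf p) (\<lambda>b. exp (c * ((if b then 1 else 0) - p))) \<le> exp (c\<^sup>2 * p)"
proof -
  have e1: "exp (c * (1 - p)) \<le> 1 + c * (1 - p) + (c * (1 - p))\<^sup>2"
    apply (rule exp_le_quad) using p c by (auto simp: abs_mult intro: mult_le_one)
  have e0: "exp (c * (0 - p)) \<le> 1 + c * (0 - p) + (c * (0 - p))\<^sup>2"
    apply (rule exp_le_quad) using p c by (auto simp: abs_mult intro: mult_le_one)
  have "measure_pmf.expectation (bernoulli_pmf p) (\<lambda>b. exp (c * ((if b then 1 else 0) - p)))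
      = exp (c * (1 - p)) * p + exp (c * (0 - p)) * (1 - p)" using p by simp
  also have "\<dots> \<le> (1 + c * (1 - p) + (c * (1 - p))\<^sup>2) * p + (1 + c * (0 - p) + (c * (0 - p))\<^sup>2) * (1 - p)"
    using e1 e0 p by (intro add_mono mult_right_mono) auto
  also have "\<dots> = 1 + c\<^sup>2 * p * (1 - p)" by (simp add: power2_eq_square algebra_simps)
  also have "\<dots> \<le> 1 + c\<^sup>2 * p" using p by (simp add: mult_left_le)
  also have "\<dots> \<le> exp (c\<^sup>2 * p)" by (rule exp_ge_add_one_self)
  finally show ?thesis .
qed

lemma tau_decomp:
  fixes x p :: real
  assumes x: "0 \<le> x" "x \<le> 1" and p: "0 < p" "p < 1"
  defines "K \<equiv> tau x - tau p - (x - p) * (ln p - ln (1 - p))"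
  shows "0 \<le> K" "K \<le> (x - p)\<^sup>2 / (p * (1 - p))"
proof -
  have Keq: "K = x * (ln x - ln p) + (1 - x) * (ln (1 - x) - ln (1 - p))"
    unfolding K_def tau_def by (simp add: algebra_simps)
  have a1: "x * (ln x - ln p) \<le> x * (x / p - 1)"
  proof (cases "x = 0")
    case False
    then have "ln x - ln p = ln (x / p)" using x p by (simp add: ln_div)
    also have "\<dots> \<le> x / p - 1" using False x p by (intro ln_le_minus_one) auto
    finally show ?thesis using x by (simp add: mult_left_mono)
  qed simp
  have a2: "(1 - x) * (ln (1 - x) - ln (1 - p)) \<le> (1 - x) * ((1 - x) / (1 - p) - 1)"
  proof (cases "x = 1")
    case False
    then have "ln (1 - x) - ln (1 - p) = ln ((1 - x) / (1 - p))" using x p by (simp add: ln_div)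
    also have "\<dots> \<le> (1 - x) / (1 - p) - 1" using False x p by (intro ln_le_minus_one) auto
    finally show ?thesis using x by (simp add: mult_left_mono)
  qed simp
  have b1: "x * (ln x - ln p) \<ge> x - p"
  proof (cases "x = 0")
    case False
    then have "ln p - ln x = ln (p / x)" using x p by (simp add: ln_div)
    also have "\<dots> \<le> p / x - 1" using False x p by (intro ln_le_minus_one) auto
    finally have "x * (ln p - ln x) \<le> x * (p / x - 1)" using x by (simp add: mult_left_mono)
    then show ?thesis using False by (simp add: algebra_simps)
  qed (use p in simp)
  have b2: "(1 - x) * (ln (1 - x) - ln (1 - p)) \<ge> (1 - x) - (1 - p)"
  proof (cases "x = 1")
    case False
    then have "ln (1 - p) - ln (1 - x) = ln ((1 - p) / (1 - x))" using x p by (simp add: ln_div)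
    also have "\<dots> \<le> (1 - p) / (1 - x) - 1" using False x p by (intro ln_le_minus_one) auto
    finally have "(1 - x) * (ln (1 - p) - ln (1 - x)) \<le> (1 - x) * ((1 - p) / (1 - x) - 1)" using x by (simp add: mult_left_mono)
    moreover have "(1 - x) * ((1 - p) / (1 - x) - 1) = (1 - p) - (1 - x)" using False by (simp add: field_simps)
    ultimately show ?thesis by (simp add: algebra_simps)
  qed (use p in simp)
  show "0 \<le> K" using b1 b2 Keq by simp
  have "x * (x / p - 1) + (1 - x) * ((1 - x) / (1 - p) - 1) = (x - p)\<^sup>2 / (p * (1 - p))"
    using p by (simp add: field_simps power2_eq_square)
  then show "K \<le> (x - p)\<^sup>2 / (p * (1 - p))" using a1 a2 Keq by simp
qed

definition Ev :: "nat \<Rightarrow> (nat\<Rightarrow>nat\<Rightarrow>real) \<Rightarrow> (nat\<Rightarrow>nat) \<Rightarrow> (nat\<Rightarrow>nat) \<Rightarrow> nat \<Rightarrow> nat \<Rightarrow> real" where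
  "Ev n P e z a b = (\<Sum>i<n. \<Sum>j<n. if i \<noteq> j \<and> e i = a \<and> e j = b then P (z i) (z j) else 0)"

lemma card_as_sum: "real (card {i\<in>{0..<(n::nat)}. Q i}) = (\<Sum>i<n. if Q i then 1 else 0)"
proof -
  have "(\<Sum>i<n. if Q i then (1::real) else 0) = (\<Sum>i\<in>{..<n} \<inter> {i. Q i}. 1) + (\<Sum>i\<in>{..<n} \<inter> -{i. Q i}. 0)"
    by (rule sum.If_cases) simp
  also have "{..<n} \<inter> {i. Q i} = {i\<in>{0..<n}. Q i}" by auto
  finally show ?thesis by simp
qed

lemma ncount_sum: "ncount n e a = (\<Sum>i<n. if e i = a then 1 else 0)"
  unfolding ncount_def by (rule card_as_sum)

lemma Rconf_sum: "Rconf n e z a c = (\<Sum>i<n. if e i = a \<and> z i = c then 1 else 0) / real n"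
  unfolding Rconf_def card_as_sum ..

lemma Ev_one: "Ev n (\<lambda>_ _. 1) e z a b = npair n e a b"
proof -
  have inner: "(\<Sum>j<n. if i \<noteq> j \<and> e i = a \<and> e j = b then 1 else 0)
      = (if e i = a then ncount n e b - (if e i = b then 1 else 0) else (0::real))" if "i < n" for i
  proof -
    have "(\<Sum>j<n. if i \<noteq> j \<and> e i = a \<and> e j = b then 1 else 0)
       = (\<Sum>j<n. (if e i = a then (if e j = b then 1 else 0) - (if j = i \<and> e i = b then 1 else 0) else (0::real)))"
      by (intro sum.cong) auto
    also have "\<dots> = (if e i = a then (\<Sum>j<n. (if e j = b then 1 else 0)) - (\<Sum>j<n. if j = i \<and> e i = b then 1 else 0) else 0)"
      by (simp add: sum_subtractf)
    also have "(\<Sum>j<n. if j = i \<and> e i = b then 1 else (0::real)) = (if e i = b then 1 else 0)"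
      using that by (simp add: sum.delta)
    finally show ?thesis by (simp add: ncount_sum)
  qed
  have "Ev n (\<lambda>_ _. 1) e z a b = (\<Sum>i<n. if e i = a then ncount n e b - (if e i = b then 1 else 0) else (0::real))"
    unfolding Ev_def by (intro sum.cong refl inner) simp
  also have "\<dots> = (\<Sum>i<n. (if e i = a then 1 else 0) * ncount n e b) - (\<Sum>i<n. if e i = a \<and> a = b then 1 else 0)"
    unfolding sum_subtractf[symmetric] by (intro sum.cong) auto
  also have "\<dots> = npair n e a b"
    apply (simp add: npair_def ncount_sum sum_distrib_right)
    apply (simp add: right_diff_distrib sum_subtractf)
    done
  finally show ?thesis .
qed

lemma Ev_bounds:
  assumes "\<forall>i<n. \<forall>j<n. L \<le> P (z i) (z j) \<and> P (z i) (z j) \<le> U"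
  shows "L * npair n e a b \<le> Ev n P e z a b" "Ev n P e z a b \<le> U * npair n e a b"
proof -
  have "L * npair n e a b = (\<Sum>i<n. \<Sum>j<n. if i \<noteq> j \<and> e i = a \<and> e j = b then L else 0)"
    by (simp add: Ev_one[symmetric, where n=n and e=e and z=z and a=a and b=b] Ev_def sum_distrib_left if_distrib cong: if_cong)
  also have "\<dots> \<le> Ev n P e z a b" unfolding Ev_def
    using assms by (intro sum_mono) auto
  finally show "L * npair n e a b \<le> Ev n P e z a b" .
  have "Ev n P e z a b \<le> (\<Sum>i<n. \<Sum>j<n. if i \<noteq> j \<and> e i = a \<and> e j = b then U else 0)"
    unfolding Ev_def using assms by (intro sum_mono) auto
  also have "\<dots> = U * npair n e a b"
    by (simp add: Ev_one[symmetric, where n=n and e=e and z=z and a=a and b=b] Ev_def sum_distrib_left if_distrib cong: if_cong)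
  finally show "Ev n P e z a b \<le> U * npair n e a b" .
qed

lemma sum_ind_collapse:
  assumes "(y::nat) < k"
  shows "(\<Sum>c<k. (if Q \<and> y = c then 1 else 0) * h c) = (if Q then h y else (0::real))"
proof -
  have "(\<Sum>c<k. (if Q \<and> y = c then 1 else 0) * h c) = (\<Sum>c<k. if y = c then (if Q then h c else 0) else 0)"
    by (intro sum.cong) auto
  also have "\<dots> = (if Q then h y else 0)" using assms by (simp add: sum.delta)
  finally show ?thesis .
qed

lemma R_weighted:
  assumes "\<forall>i<n. z i < k"
  shows "(\<Sum>c<k. Rconf n e z a c * h c) = (\<Sum>i<n. if e i = a then h (z i) else 0) / real n"
proof -
  have "(\<Sum>c<k. Rconf n e z a c * h c) = (\<Sum>c<k. \<Sum>i<n. (if e i = a \<and> z i = c then 1 else 0) * h c) / real n"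
    by (simp add: Rconf_sum sum_divide_distrib sum_distrib_right)
  also have "\<dots> = (\<Sum>i<n. \<Sum>c<k. (if e i = a \<and> z i = c then 1 else 0) * h c) / real n"
    by (subst sum.swap) simp
  also have "(\<Sum>i<n. \<Sum>c<k. (if e i = a \<and> z i = c then 1 else 0) * h c) = (\<Sum>i<n. if e i = a then h (z i) else 0)"
    using assms by (intro sum.cong refl sum_ind_collapse) auto
  finally show ?thesis .
qed

lemma Rrow_sum:
  assumes "\<forall>i<n. z i < k"
  shows "(\<Sum>c<k. Rconf n e z a c) = ncount n e a / real n"
  using R_weighted[OF assms, of e a "\<lambda>_. 1"] by (simp add: ncount_sum)

lemma Rdiag_sum:
  assumes "\<forall>i<n. z i < k"
  shows "(\<Sum>c<k. P c c * Rconf n e z a c) = (\<Sum>i<n. if e i = a then P (z i) (z i) else 0) / real n"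
  using R_weighted[OF assms, of e a "\<lambda>c. P c c"] by (simp add: mult.commute)

lemma Rquad_sum:
  assumes z: "\<forall>i<n. z i < k"
  shows "(\<Sum>c<k. \<Sum>d<k. Rconf n e z a c * P c d * Rconf n e z b d)
       = (\<Sum>i<n. \<Sum>j<n. if e i = a \<and> e j = b then P (z i) (z j) else 0) / (real n)\<^sup>2"
proof -
  have inner: "(\<Sum>d<k. Rconf n e z b d * P c d) = (\<Sum>j<n. if e j = b then P c (z j) else 0) / real n" for c
    by (rule R_weighted[OF z])
  have "(\<Sum>c<k. \<Sum>d<k. Rconf n e z a c * P c d * Rconf n e z b d)
      = (\<Sum>c<k. Rconf n e z a c * (\<Sum>d<k. Rconf n e z b d * P c d))"
    by (simp add: sum_distrib_left mult_ac)
  also have "\<dots> = (\<Sum>c<k. Rconf n e z a c * ((\<Sum>j<n. if e j = b then P c (z j) else 0) / real n))"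
    by (simp add: inner)
  also have "\<dots> = (\<Sum>i<n. if e i = a then (\<Sum>j<n. if e j = b then P (z i) (z j) else 0) / real n else 0) / real n"
    by (rule R_weighted[OF z])
  also have "\<dots> = (\<Sum>i<n. \<Sum>j<n. if e i = a \<and> e j = b then P (z i) (z j) else 0) / (real n)\<^sup>2"
  proof -
    have "(\<Sum>i<n. if e i = a then (\<Sum>j<n. if e j = b then P (z i) (z j) else 0) / real n else 0)
        = (\<Sum>i<n. (\<Sum>j<n. if e i = a \<and> e j = b then P (z i) (z j) else 0) / real n)"
      by (intro sum.cong refl) auto
    then show ?thesis by (simp add: power2_eq_square sum_divide_distrib)
  qed
  finally show ?thesis .
qed

lemma sum_split_diag:
  assumes "(i::nat) < n"
  shows "(\<Sum>j<n. F j) = F i + (\<Sum>j<n. if i \<noteq> j then F j else (0::real))"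
proof -
  have "(\<Sum>j<n. F j) = (\<Sum>j<n. (if i = j then F j else 0) + (if i \<noteq> j then F j else (0::real)))"
    by (intro sum.cong) auto
  then show ?thesis using assms by (simp add: sum.distrib sum.delta)
qed

lemma Ev_split:
  "Ev n P e z a b = (\<Sum>i<n. \<Sum>j<n. if e i = a \<and> e j = b then P (z i) (z j) else 0)
      - (if a = b then (\<Sum>i<n. if e i = a then P (z i) (z i) else 0) else 0)"
proof -
  have "(\<Sum>i<n. \<Sum>j<n. if e i = a \<and> e j = b then P (z i) (z j) else 0)
     = (\<Sum>i<n. (if e i = a \<and> e i = b then P (z i) (z i) else 0) + (\<Sum>j<n. if i \<noteq> j \<and> e i = a \<and> e j = b then P (z i) (z j) else 0))"
  proof (intro sum.cong refl)
    fix i assume "i \<in> {..<n}"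
    then show "(\<Sum>j<n. if e i = a \<and> e j = b then P (z i) (z j) else 0)
     = (if e i = a \<and> e i = b then P (z i) (z i) else 0) + (\<Sum>j<n. if i \<noteq> j \<and> e i = a \<and> e j = b then P (z i) (z j) else 0)"
      by (subst sum_split_diag[of i n]) (auto intro!: sum.cong)
  qed
  also have "\<dots> = (\<Sum>i<n. if e i = a \<and> e i = b then P (z i) (z i) else 0) + Ev n P e z a b"
    by (simp add: sum.distrib Ev_def)
  also have "(\<Sum>i<n. if e i = a \<and> e i = b then P (z i) (z i) else 0) = (if a = b then (\<Sum>i<n. if e i = a then P (z i) (z i) else 0) else 0)"
    by (cases "a = b") (auto intro!: sum.neutral)
  finally show ?thesis by simp
qed

lemma PR_Ev:
  assumes n: "n > 0" and z: "\<forall>i<n. z i < k" and np: "npair n e a b \<noteq> 0"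
  shows "PR k n P (Rconf n e z) a b = Ev n P e z a b / npair n e a b"
proof -
  have den: "(\<Sum>c<k. Rconf n e z a c) * ((\<Sum>c<k. Rconf n e z b c) - (if a = b then 1 / real n else 0))
      = npair n e a b / (real n)\<^sup>2"
    using n by (simp add: Rrow_sum[OF z] npair_def field_simps power2_eq_square)
  have num: "(\<Sum>c<k. \<Sum>d<k. Rconf n e z a c * P c d * Rconf n e z b d)
        - (if a = b then (\<Sum>c<k. P c c * Rconf n e z a c) / real n else 0) = Ev n P e z a b / (real n)\<^sup>2"
    unfolding Rquad_sum[OF z] Rdiag_sum[OF z] Ev_split using n by (simp add: field_simps power2_eq_square)
  show ?thesis unfolding PR_def num den using n np by (simp add: field_simps)
qed

lemma ncount_nonneg: "0 \<le> ncount n e a" by (simp add: ncount_def)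

lemma ncount_le: "ncount n e a \<le> real n"
proof -
  have "card {i\<in>{0..<n}. e i = a} \<le> card {0..<n}" by (intro card_mono) auto
  then show ?thesis by (simp add: ncount_def)
qed

lemma npair_nonneg: "0 \<le> npair n e a b"
proof (cases "a = b")
  case True
  have "real m = 0 \<or> real m \<ge> 1" for m :: nat by (cases m) auto
  then have "ncount n e a = 0 \<or> ncount n e a \<ge> 1" unfolding ncount_def by blast
  then show ?thesis using True by (auto simp: npair_def ncount_nonneg)
qed (auto simp: npair_def ncount_nonneg)

lemma npair_le: "npair n e a b \<le> (real n)\<^sup>2"
proof -
  have "npair n e a b \<le> ncount n e a * ncount n e b"
    by (auto simp: npair_def ncount_nonneg mult_left_mono)
  also have "\<dots> \<le> real n * real n" by (intro mult_mono ncount_le) (auto simp: ncount_nonneg)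
  finally show ?thesis by (simp add: power2_eq_square)
qed

lemma ocount_nonneg: "0 \<le> ocount n A e a b"
  unfolding ocount_def by (intro sum_nonneg) auto

lemma ocount_le_npair:
  assumes "\<forall>i. \<not> A i i"
  shows "ocount n A e a b \<le> npair n e a b"
proof -
  have "ocount n A e a b \<le> Ev n (\<lambda>_ _. 1) e z a b"
    unfolding ocount_def Ev_def using assms by (intro sum_mono) auto
  then show ?thesis by (simp add: Ev_one)
qed

lemma sum_if_eq_const: "(y::nat) < k \<Longrightarrow> (\<Sum>b<k. if y = b then G else (0::real)) = G"
  by simp

lemma swap3: "(\<Sum>b\<in>B. \<Sum>i\<in>I. \<Sum>j\<in>J. H b i j) = (\<Sum>i\<in>I. \<Sum>j\<in>J. \<Sum>b\<in>B. (H b i j :: real))"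
proof -
  have "(\<Sum>b\<in>B. \<Sum>i\<in>I. \<Sum>j\<in>J. H b i j) = (\<Sum>i\<in>I. \<Sum>b\<in>B. \<Sum>j\<in>J. H b i j)" by (rule sum.swap)
  also have "\<dots> = (\<Sum>i\<in>I. \<Sum>j\<in>J. \<Sum>b\<in>B. H b i j)" by (intro sum.cong refl) (rule sum.swap)
  finally show ?thesis .
qed

lemma sum_pairs_collapse:
  fixes e :: "nat \<Rightarrow> nat" and k n :: nat
  assumes "\<forall>i<n. e i < k"
  shows "(\<Sum>a<k. \<Sum>b<k. \<Sum>i<n. \<Sum>j<n. if e i = a \<and> e j = b then F i j else 0) = (\<Sum>i<n. \<Sum>j<n. (F i j :: real))"
proof -
  have "(\<Sum>a<k. \<Sum>b<k. \<Sum>i<n. \<Sum>j<n. if e i = a \<and> e j = b then F i j else 0)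
      = (\<Sum>a<k. \<Sum>i<n. \<Sum>j<n. \<Sum>b<k. if e i = a \<and> e j = b then F i j else 0)"
    by (rule sum.cong[OF refl]) (rule swap3)
  also have "\<dots> = (\<Sum>i<n. \<Sum>j<n. \<Sum>a<k. \<Sum>b<k. if e i = a \<and> e j = b then F i j else 0)"
    by (rule swap3)
  also have "\<dots> = (\<Sum>i<n. \<Sum>j<n. F i j)"
  proof (intro sum.cong refl)
    fix i j assume "i \<in> {..<n}" "j \<in> {..<n}"
    then have "e i < k" "e j < k" using assms by auto
    then show "(\<Sum>a<k. \<Sum>b<k. if e i = a \<and> e j = b then F i j else 0) = F i j"
    proof -
      have in1: "(\<Sum>b<k. if e i = a \<and> e j = b then F i j else 0) = (if e i = a then F i j else 0)" for a
      proof -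
        have "(\<Sum>b<k. if e i = a \<and> e j = b then F i j else 0) = (\<Sum>b<k. if e j = b then (if e i = a then F i j else 0) else 0)"
          by (intro sum.cong) auto
        also have "\<dots> = (if e i = a then F i j else 0)" using \<open>e j < k\<close> by (cases "e i = a") (simp_all add: sum_if_eq_const)
        finally show ?thesis .
      qed
      have "(\<Sum>a<k. \<Sum>b<k. if e i = a \<and> e j = b then F i j else 0) = (\<Sum>a<k. if e i = a then F i j else 0)"
        by (simp only: in1)
      also have "\<dots> = F i j" using \<open>e i < k\<close> by (rule sum_if_eq_const)
      finally show ?thesis .
    qed
  qed
  finally show ?thesis .
qed

lemma D_total:
  assumes "\<forall>i<n. e i < k"
  shows "(\<Sum>a<k. \<Sum>b<k. ocount n A e a b - Ev n P e z a b)
       = (\<Sum>i<n. \<Sum>j<n. (if A i j then 1 else 0) - (if i \<noteq> j then P (z i) (z j) else 0))"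
proof -
  have o: "ocount n A e a b = (\<Sum>i<n. \<Sum>j<n. if e i = a \<and> e j = b then (if A i j then 1 else 0) else 0)" for a b
    unfolding ocount_def by (intro sum.cong refl) auto
  have E: "Ev n P e z a b = (\<Sum>i<n. \<Sum>j<n. if e i = a \<and> e j = b then (if i \<noteq> j then P (z i) (z j) else 0) else 0)" for a b
    unfolding Ev_def by (intro sum.cong refl) auto
  show ?thesis
    unfolding o E sum_subtractf sum_pairs_collapse[OF assms] ..
qed

lemma pair_term:
  fixes \<rho> smin smax \<gamma> :: real
  assumes n: "n > 0" and \<rho>: "\<rho> > 0" and smin: "smin > 0" and half: "\<rho> * smax \<le> 1/2"
    and S: "\<forall>c<k. \<forall>d<k. smin \<le> S c d \<and> S c d \<le> smax"
    and z: "\<forall>i<n. z i < k" and A: "\<forall>i. \<not> A i i" and \<gamma>: "\<gamma> \<ge> 0"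
    and bnd: "(ocount n A e a b - Ev n (\<lambda>c d. \<rho> * S c d) e z a b)\<^sup>2 \<le> \<gamma>\<^sup>2 * \<rho>\<^sup>2 * (real n)\<^sup>2 * npair n e a b"
  shows "\<bar>npair n e a b * (tau (ocount n A e a b / npair n e a b) - tau (PR k n (\<lambda>c d. \<rho> * S c d) (Rconf n e z) a b))
           - (ocount n A e a b - Ev n (\<lambda>c d. \<rho> * S c d) e z a b) * ln \<rho>\<bar>
         \<le> \<rho> * (real n)\<^sup>2 * ((\<bar>ln smin\<bar> + \<bar>ln smax\<bar> + ln 2) * \<gamma> + 2 * \<gamma>\<^sup>2 / smin)"
proof -
  define P where "P = (\<lambda>c d. \<rho> * S c d)"
  define N where "N = npair n e a b"
  define oc where "oc = ocount n A e a b"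
  define E where "E = Ev n P e z a b"
  define D where "D = oc - E"
  define Cc where "Cc = \<bar>ln smin\<bar> + \<bar>ln smax\<bar> + ln 2"
  have Cc0: "Cc \<ge> 0" unfolding Cc_def by simp
  have RHS0: "0 \<le> \<rho> * (real n)\<^sup>2 * (Cc * \<gamma> + 2 * \<gamma>\<^sup>2 / smin)"
    using \<rho> Cc0 \<gamma> smin by (intro mult_nonneg_nonneg add_nonneg_nonneg) auto
  have N0: "N \<ge> 0" unfolding N_def by (rule npair_nonneg)
  have o0: "0 \<le> oc" and oN: "oc \<le> N" unfolding oc_def N_def using A by (auto simp: ocount_nonneg ocount_le_npair)
  have Pb: "\<forall>i<n. \<forall>j<n. \<rho> * smin \<le> P (z i) (z j) \<and> P (z i) (z j) \<le> \<rho> * smax"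
    using S z \<rho> by (auto simp: P_def)
  have EL: "\<rho> * smin * N \<le> E" and EU: "E \<le> \<rho> * smax * N"
    using Ev_bounds[where n=n and P=P and z=z and L="\<rho> * smin" and U="\<rho> * smax" and e=e and a=a and b=b] Pb unfolding E_def N_def by auto
  show ?thesis
  proof (cases "N = 0")
    case True
    then have "oc = 0" "E = 0" using o0 oN EL EU by auto
    then show ?thesis using RHS0 True
      unfolding Cc_def P_def[symmetric] oc_def[symmetric] E_def[symmetric] N_def[symmetric] by simp
  next
    case False
    then have Npos: "N > 0" using N0 by simp
    define p where "p = E / N"
    have PR: "PR k n P (Rconf n e z) a b = p"
      unfolding p_def E_def N_def using PR_Ev[OF n z, of e a b P] False N_def by simp
    have pL: "\<rho> * smin \<le> p" and pU: "p \<le> \<rho> * smax"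
      using EL EU Npos by (auto simp: p_def field_simps)
    have p0: "0 < p" using pL \<rho> smin by (smt (verit) mult_pos_pos)
    have p1: "p \<le> 1/2" using pU half by simp
    define x where "x = oc / N"
    have x0: "0 \<le> x" and x1: "x \<le> 1" using o0 oN Npos by (auto simp: x_def field_simps)
    define K where "K = tau x - tau p - (x - p) * (ln p - ln (1 - p))"
    have K0: "0 \<le> K" and K1: "K \<le> (x - p)\<^sup>2 / (p * (1 - p))"
      using tau_decomp[OF x0 x1 p0] p1 unfolding K_def by auto
    have NxD: "N * (x - p) = D" using Npos by (simp add: x_def p_def D_def field_simps)
    have lnp: "ln p = ln \<rho> + ln (p / \<rho>)" using p0 \<rho> by (simp add: ln_div)
    have main: "N * (tau x - tau p) - D * ln \<rho> = D * (ln (p / \<rho>) - ln (1 - p)) + N * K"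
    proof -
      have "N * (tau x - tau p) = N * K + (N * (x - p)) * (ln p - ln (1 - p))"
        unfolding K_def by (simp add: algebra_simps)
      also have "\<dots> = N * K + D * (ln \<rho> + ln (p / \<rho>) - ln (1 - p))" using NxD lnp by simp
      finally show ?thesis by (simp add: algebra_simps)
    qed
    have spr: "smin \<le> p / \<rho>" "p / \<rho> \<le> smax" using pL pU \<rho> by (auto simp: field_simps)
    have l1: "\<bar>ln (p / \<rho>)\<bar> \<le> \<bar>ln smin\<bar> + \<bar>ln smax\<bar>"
    proof -
      have "ln smin \<le> ln (p / \<rho>)" using spr smin by simp
      moreover have "ln (p / \<rho>) \<le> ln smax" using spr smin by simp
      ultimately show ?thesis by linarith
    qed
    have l2: "\<bar>ln (1 - p)\<bar> \<le> ln 2"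
    proof -
      have "ln (1/2) \<le> ln (1 - p)" using p1 by simp
      moreover have "ln (1 - p) \<le> 0" using p0 p1 by simp
      ultimately show ?thesis by (simp add: ln_div)
    qed
    have lc: "\<bar>ln (p / \<rho>) - ln (1 - p)\<bar> \<le> Cc" unfolding Cc_def using l1 l2 by linarith
    have D2: "D\<^sup>2 \<le> \<gamma>\<^sup>2 * \<rho>\<^sup>2 * (real n)\<^sup>2 * N"
      using bnd unfolding D_def oc_def E_def N_def P_def .
    have Nle: "N \<le> (real n)\<^sup>2" unfolding N_def by (rule npair_le)
    have "D\<^sup>2 \<le> (\<gamma> * \<rho> * (real n)\<^sup>2)\<^sup>2"
    proof -
      have "\<gamma>\<^sup>2 * \<rho>\<^sup>2 * (real n)\<^sup>2 * N \<le> \<gamma>\<^sup>2 * \<rho>\<^sup>2 * (real n)\<^sup>2 * (real n)\<^sup>2"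
        using Nle by (intro mult_left_mono) auto
      then show ?thesis using D2 by (simp add: power_mult_distrib power2_eq_square mult_ac)
    qed
    have absD: "\<bar>D\<bar> \<le> \<gamma> * \<rho> * (real n)\<^sup>2"
    proof (rule power2_le_imp_le)
      from \<open>D\<^sup>2 \<le> (\<gamma> * \<rho> * (real n)\<^sup>2)\<^sup>2\<close> show "\<bar>D\<bar>\<^sup>2 \<le> (\<gamma> * \<rho> * (real n)\<^sup>2)\<^sup>2" by (simp only: power2_abs)
      show "0 \<le> \<gamma> * \<rho> * (real n)\<^sup>2" using \<gamma> \<rho> by simp
    qed
    have t1: "\<bar>D * (ln (p / \<rho>) - ln (1 - p))\<bar> \<le> \<rho> * (real n)\<^sup>2 * (Cc * \<gamma>)"
    proof -
      have "\<bar>D * (ln (p / \<rho>) - ln (1 - p))\<bar> \<le> (\<gamma> * \<rho> * (real n)\<^sup>2) * Cc"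
        unfolding abs_mult using absD lc by (intro mult_mono) auto
      then show ?thesis by (simp add: mult_ac)
    qed
    have t2: "N * K \<le> \<rho> * (real n)\<^sup>2 * (2 * \<gamma>\<^sup>2 / smin)"
    proof -
      have "N * K \<le> N * ((x - p)\<^sup>2 / (p * (1 - p)))" using K1 Npos by (intro mult_left_mono) auto
      also have "\<dots> = D\<^sup>2 / (N * (p * (1 - p)))"
        unfolding NxD[symmetric] using Npos p0 p1 by (simp add: field_simps power2_eq_square)
      also have "\<dots> \<le> D\<^sup>2 / (N * (\<rho> * smin / 2))"
      proof (rule divide_left_mono)
        have "\<rho> * smin / 2 \<le> p * (1 - p)"
        proof -
          have "p / 2 \<le> p * (1 - p)" using p0 p1 by (simp add: mult_left_mono field_simps)
          then show ?thesis using pL by simp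
        qed
        then show "N * (\<rho> * smin / 2) \<le> N * (p * (1 - p))" using Npos by (intro mult_left_mono) auto
        show "0 < N * (p * (1 - p)) * (N * (\<rho> * smin / 2))" using Npos p0 p1 \<rho> smin by simp
      qed simp
      also have "\<dots> \<le> \<gamma>\<^sup>2 * \<rho>\<^sup>2 * (real n)\<^sup>2 * N / (N * (\<rho> * smin / 2))"
        using D2 Npos \<rho> smin by (intro divide_right_mono) auto
      also have "\<dots> = \<rho> * (real n)\<^sup>2 * (2 * \<gamma>\<^sup>2 / smin)"
        using Npos \<rho> smin by (simp add: field_simps power2_eq_square)
      finally show ?thesis .
    qed
    have "\<bar>N * (tau x - tau p) - D * ln \<rho>\<bar> \<le> \<rho> * (real n)\<^sup>2 * (Cc * \<gamma> + 2 * \<gamma>\<^sup>2 / smin)"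
      unfolding main using t1 t2 K0 Npos by (simp add: distrib_left abs_le_iff) (smt (verit) mult_nonneg_nonneg)
    then show ?thesis unfolding Cc_def x_def p_def[symmetric] PR[symmetric] D_def
      oc_def E_def N_def P_def .
  qed
qed

lemma det_main:
  fixes \<rho> smin smax \<gamma> :: real
  assumes n: "n > 0" and \<rho>: "\<rho> > 0" and smin: "smin > 0" and half: "\<rho> * smax \<le> 1/2"
    and S: "\<forall>c<k. \<forall>d<k. smin \<le> S c d \<and> S c d \<le> smax"
    and z: "\<forall>i<n. z i < k" and e: "\<forall>i<n. e i < k" and A: "\<forall>i. \<not> A i i" and \<gamma>: "\<gamma> \<ge> 0"
    and be: "\<forall>a<k. \<forall>b<k. (ocount n A e a b - Ev n (\<lambda>c d. \<rho> * S c d) e z a b)\<^sup>2 \<le> \<gamma>\<^sup>2 * \<rho>\<^sup>2 * (real n)\<^sup>2 * npair n e a b"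
    and bz: "\<forall>a<k. \<forall>b<k. (ocount n A z a b - Ev n (\<lambda>c d. \<rho> * S c d) z z a b)\<^sup>2 \<le> \<gamma>\<^sup>2 * \<rho>\<^sup>2 * (real n)\<^sup>2 * npair n z a b"
  shows "\<bar>Xfun k n (\<lambda>c d. \<rho> * S c d) A e z - Xfun k n (\<lambda>c d. \<rho> * S c d) A z z\<bar>
         \<le> real k ^ 2 * \<rho> * ((\<bar>ln smin\<bar> + \<bar>ln smax\<bar> + ln 2) * \<gamma> + 2 * \<gamma>\<^sup>2 / smin)"
proof -
  define P where "P = (\<lambda>c d. \<rho> * S c d)"
  define B where "B = \<rho> * (real n)\<^sup>2 * ((\<bar>ln smin\<bar> + \<bar>ln smax\<bar> + ln 2) * \<gamma> + 2 * \<gamma>\<^sup>2 / smin)"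
  define trm where "trm f a b = npair n f a b * (tau (ocount n A f a b / npair n f a b) - tau (PR k n P (Rconf n f z) a b))" for f a b
  define D where "D f a b = ocount n A f a b - Ev n P f z a b" for f a b
  define r where "r f a b = trm f a b - D f a b * ln \<rho>" for f a b
  have rb: "\<bar>r f a b\<bar> \<le> B" if "a < k" "b < k" "f = e \<or> f = z" for f a b
    using that pair_term[where n=n and \<rho>=\<rho> and smin=smin and smax=smax and S=S and k=k and z=z and A=A and \<gamma>=\<gamma> and e=f and a=a and b=b]
      n \<rho> smin half S z A \<gamma> be bz
    unfolding r_def trm_def D_def B_def P_def by auto
  have tot: "(\<Sum>a<k. \<Sum>b<k. D f a b) = (\<Sum>i<n. \<Sum>j<n. (if A i j then 1 else 0) - (if i \<noteq> j then P (z i) (z j) else 0))"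
    if "\<forall>i<n. f i < k" for f
    unfolding D_def using D_total[OF that] .
  have sumterm: "(\<Sum>a<k. \<Sum>b<k. trm f a b) = (\<Sum>a<k. \<Sum>b<k. r f a b) + ln \<rho> * (\<Sum>a<k. \<Sum>b<k. D f a b)" for f
    unfolding r_def sum_subtractf sum_distrib_left by (simp add: mult.commute)
  have Xf: "Xfun k n P A f z = 1 / (2 * real n ^ 2) * (\<Sum>a<k. \<Sum>b<k. trm f a b)" for f
    unfolding Xfun_def trm_def ..
  have sr: "\<bar>\<Sum>a<k. \<Sum>b<k. r f a b\<bar> \<le> real k ^ 2 * B" if "f = e \<or> f = z" for f
  proof -
    have "\<bar>\<Sum>a<k. \<Sum>b<k. r f a b\<bar> \<le> (\<Sum>a<k. \<Sum>b<k. \<bar>r f a b\<bar>)"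
      by (rule order_trans[OF sum_abs]) (intro sum_mono sum_abs)
    also have "\<dots> \<le> (\<Sum>a<k. \<Sum>b<k. B)" using rb that by (intro sum_mono) auto
    also have "\<dots> = real k ^ 2 * B" by (simp add: power2_eq_square)
    finally show ?thesis .
  qed
  have aux: "1/c*(x + t) - 1/c*(y + t) = (x - y)/(c::real)" for c x y t
    by (cases "c = 0") (simp_all add: field_simps)
  have "Xfun k n P A e z - Xfun k n P A z z
      = ((\<Sum>a<k. \<Sum>b<k. r e a b) - (\<Sum>a<k. \<Sum>b<k. r z a b)) / (2 * real n ^ 2)"
    unfolding Xf sumterm tot[OF e] tot[OF z] by (rule aux)
  also have "\<bar>\<dots>\<bar> \<le> (2 * (real k ^ 2 * B)) / (2 * real n ^ 2)"
  proof -
    have "\<bar>(\<Sum>a<k. \<Sum>b<k. r e a b) - (\<Sum>a<k. \<Sum>b<k. r z a b)\<bar> \<le> 2 * (real k ^ 2 * B)"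
      using sr[of e] sr[of z] by simp
    moreover have "\<bar>2 * (real n)\<^sup>2\<bar> = 2 * (real n)\<^sup>2" by simp
    ultimately show ?thesis unfolding abs_divide by (metis divide_right_mono zero_le_power2 mult_nonneg_nonneg zero_le_numeral)
  qed
  also have "(2 * (real k ^ 2 * B)) / (2 * real n ^ 2) = real k ^ 2 * \<rho> * ((\<bar>ln smin\<bar> + \<bar>ln smax\<bar> + ln 2) * \<gamma> + 2 * \<gamma>\<^sup>2 / smin)"
    unfolding B_def using n by simp
  finally show ?thesis unfolding P_def .
qed

lemma chernoff_gen:
  fixes I :: "'a set" and Q :: "'a \<Rightarrow> 'b pmf" and h :: "'a \<Rightarrow> 'b \<Rightarrow> bool"
    and p w :: "'a \<Rightarrow> real" and l \<sigma> t :: real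
  assumes fin: "finite I"
    and Qh: "\<forall>x\<in>I. map_pmf (h x) (Q x) = bernoulli_pmf (p x)"
    and p: "\<forall>x\<in>I. 0 \<le> p x \<and> p x \<le> 1"
    and w: "\<forall>x\<in>I. 0 \<le> w x \<and> w x \<le> 2"
    and lam: "0 < l" "l \<le> 1/2" and sig: "\<bar>\<sigma>\<bar> = 1"
  shows "measure_pmf.prob (Pi_pmf I d Q)
           {U. t \<le> \<sigma> * (\<Sum>x\<in>I. w x * ((if h x (U x) then 1 else 0) - p x))}
         \<le> exp (2 * l\<^sup>2 * (\<Sum>x\<in>I. w x * p x) - l * t)"
proof -
  define F where "F x b = exp (l * \<sigma> * w x * ((if b then 1 else 0) - p x))" for x b
  define f where "f x v = F x (h x v)" for x v
  have bfin: "finite (set_pmf (bernoulli_pmf q))" for q by (rule finite_subset[of _ UNIV]) auto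
  have intf: "integrable (measure_pmf (Q x)) (f x)" if "x \<in> I" for x
  proof -
    have "integrable (map_pmf (h x) (Q x)) (F x)"
      using Qh that by (simp add: integrable_measure_pmf_finite[OF bfin])
    then show ?thesis unfolding f_def by simp
  qed
  have Ef: "measure_pmf.expectation (Q x) (f x) \<le> exp (2 * l\<^sup>2 * (w x * p x))" if x: "x \<in> I" for x
  proof -
    have "measure_pmf.expectation (Q x) (f x) = measure_pmf.expectation (map_pmf (h x) (Q x)) (F x)"
      unfolding f_def by simp
    also have "\<dots> = measure_pmf.expectation (bernoulli_pmf (p x)) (\<lambda>b. exp ((l * \<sigma> * w x) * ((if b then 1 else 0) - p x)))"
    proof -
      have "F x = (\<lambda>b. exp ((l * \<sigma> * w x) * ((if b then 1 else 0) - p x)))"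
        by (rule ext) (simp add: F_def)
      then show ?thesis using Qh x by simp
    qed
    also have "\<dots> \<le> exp ((l * \<sigma> * w x)\<^sup>2 * p x)"
    proof (rule bern_mgf)
      show "0 \<le> p x" "p x \<le> 1" using p x by auto
      have "\<bar>l * \<sigma> * w x\<bar> = l * w x" using sig lam w x by (simp add: abs_mult)
      also have "\<dots> \<le> 1/2 * 2" using lam w x by (intro mult_mono) auto
      finally show "\<bar>l * \<sigma> * w x\<bar> \<le> 1" by simp
    qed
    also have "\<dots> \<le> exp (2 * l\<^sup>2 * (w x * p x))"
    proof -
      have s2: "\<sigma>\<^sup>2 = 1" using sig by (metis abs_power2 power2_abs power_one) 
      have "w x * w x \<le> 2 * w x" using w x by (intro mult_right_mono) auto
      have e1: "(l * \<sigma> * w x)\<^sup>2 * p x = l\<^sup>2 * (w x)\<^sup>2 * p x"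
        by (simp only: power_mult_distrib s2)
      have "l\<^sup>2 * (w x)\<^sup>2 * p x \<le> l\<^sup>2 * (2 * w x) * p x"
        using \<open>w x * w x \<le> 2 * w x\<close> p x by (intro mult_right_mono mult_left_mono) (auto simp: power2_eq_square)
      then have "(l * \<sigma> * w x)\<^sup>2 * p x \<le> 2 * l\<^sup>2 * (w x * p x)"
        unfolding e1 by (simp add: mult_ac)
      then show ?thesis by simp
    qed
    finally show ?thesis .
  qed
  define G where "G U = (\<Prod>x\<in>I. f x (U x))" for U
  have Gexp: "G U = exp (l * (\<sigma> * (\<Sum>x\<in>I. w x * ((if h x (U x) then 1 else 0) - p x))))" for U
    unfolding G_def f_def F_def using fin
    by (simp add: exp_sum[symmetric] sum_distrib_left mult_ac)
  have sub: "{U. t \<le> \<sigma> * (\<Sum>x\<in>I. w x * ((if h x (U x) then 1 else 0) - p x))}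
      \<subseteq> {U \<in> space (measure_pmf (Pi_pmf I d Q)). exp (l * t) \<le> G U}"
    using lam by (auto simp: Gexp)
  have intG: "integrable (measure_pmf (Pi_pmf I d Q)) G"
    unfolding G_def by (rule integrable_prod_Pi_pmf[OF fin intf])
  have EG: "measure_pmf.expectation (Pi_pmf I d Q) G \<le> exp (2 * l\<^sup>2 * (\<Sum>x\<in>I. w x * p x))"
  proof -
    have "measure_pmf.expectation (Pi_pmf I d Q) G = (\<Prod>x\<in>I. measure_pmf.expectation (Q x) (f x))"
      unfolding G_def by (rule expectation_prod_Pi_pmf[OF fin intf]) (auto simp: f_def F_def)
    also have "\<dots> \<le> (\<Prod>x\<in>I. exp (2 * l\<^sup>2 * (w x * p x)))"
      by (intro prod_mono conjI Ef integral_nonneg_AE AE_pmfI) (auto simp: f_def F_def)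
    also have "\<dots> = exp (2 * l\<^sup>2 * (\<Sum>x\<in>I. w x * p x))"
      using fin by (simp add: exp_sum[symmetric] sum_distrib_left)
    finally show ?thesis .
  qed
  have "measure_pmf.prob (Pi_pmf I d Q) {U. t \<le> \<sigma> * (\<Sum>x\<in>I. w x * ((if h x (U x) then 1 else 0) - p x))}
      \<le> measure_pmf.prob (Pi_pmf I d Q) {U \<in> space (measure_pmf (Pi_pmf I d Q)). exp (l * t) \<le> G U}"
    by (rule measure_pmf.finite_measure_mono[OF sub]) simp
  also have "\<dots> \<le> measure_pmf.expectation (Pi_pmf I d Q) G / exp (l * t)"
    by (rule integral_Markov_inequality_measure[OF intG, where A = UNIV]) (auto simp: G_def f_def F_def prod_nonneg)
  also have "\<dots> \<le> exp (2 * l\<^sup>2 * (\<Sum>x\<in>I. w x * p x)) / exp (l * t)"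
    by (rule divide_right_mono[OF EG]) simp
  finally show ?thesis by (simp add: exp_diff)
qed

definition symA :: "(nat \<times> nat \<Rightarrow> bool) \<Rightarrow> nat \<Rightarrow> nat \<Rightarrow> bool" where
  "symA U = (\<lambda>i j. if i < j then U (i,j) else if j < i then U (j,i) else False)"

definition Iset :: "nat \<Rightarrow> (nat \<times> nat) set" where
  "Iset n = {(i,j). i < j \<and> j < n}"

lemma Iset_finite: "finite (Iset n)"
  by (rule finite_subset[of _ "{..<n} \<times> {..<n}"]) (auto simp: Iset_def)

lemma Iset_Suc: "Iset (Suc n) = Iset n \<union> (\<lambda>i. (i, n)) ` {..<n}"
  by (auto simp: Iset_def less_Suc_eq)

lemma pair_sum:
  fixes g :: "nat \<Rightarrow> nat \<Rightarrow> real"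
  assumes "\<forall>i. g i i = 0"
  shows "(\<Sum>i<n. \<Sum>j<n. g i j) = (\<Sum>x\<in>Iset n. g (fst x) (snd x) + g (snd x) (fst x))"
proof (induction n)
  case 0
  then show ?case by (simp add: Iset_def)
next
  case (Suc n)
  have disj: "Iset n \<inter> (\<lambda>i. (i, n)) ` {..<n} = {}" by (auto simp: Iset_def)
  have inj: "inj_on (\<lambda>i. (i, n)) {..<n}" by (auto simp: inj_on_def)
  have "(\<Sum>i<Suc n. \<Sum>j<Suc n. g i j) = (\<Sum>i<n. \<Sum>j<n. g i j) + (\<Sum>i<n. g i n) + (\<Sum>j<n. g n j) + g n n"
    by (simp add: sum.distrib)
  also have "\<dots> = (\<Sum>x\<in>Iset n. g (fst x) (snd x) + g (snd x) (fst x)) + (\<Sum>i<n. g i n + g n i)"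
    using Suc assms by (simp add: sum.distrib)
  also have "(\<Sum>i<n. g i n + g n i) = (\<Sum>x\<in>(\<lambda>i. (i, n)) ` {..<n}. g (fst x) (snd x) + g (snd x) (fst x))"
    by (subst sum.reindex[OF inj]) simp
  also have "(\<Sum>x\<in>Iset n. g (fst x) (snd x) + g (snd x) (fst x)) + \<dots>
      = (\<Sum>x\<in>Iset (Suc n). g (fst x) (snd x) + g (snd x) (fst x))"
    unfolding Iset_Suc by (rule sum.union_disjoint[symmetric]) (use disj Iset_finite in auto)
  finally show ?case .
qed

definition wgt :: "(nat \<Rightarrow> nat) \<Rightarrow> nat \<Rightarrow> nat \<Rightarrow> nat \<times> nat \<Rightarrow> real" where
  "wgt e a b x = (if e (fst x) = a \<and> e (snd x) = b then 1 else 0) + (if e (snd x) = a \<and> e (fst x) = b then 1 else 0)"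

lemma two_ind: "0 \<le> (if A then 1 else 0) + (if B then 1 else (0::real)) \<and> (if A then 1 else 0) + (if B then 1 else (0::real)) \<le> 2"
  by simp

lemma gen1: "(if A then (p::real) else 0) + (if B then p else 0) = ((if A then 1 else 0) + (if B then 1 else 0)) * p"
  by simp

lemma gen2: "(if A \<and> u then 1 else 0) + (if B \<and> u then 1 else 0) = ((if A then 1 else 0) + (if B then 1 else 0)) * (if u then 1 else (0::real))"
  by simp

lemma wgt_bounds: "0 \<le> wgt e a b x \<and> wgt e a b x \<le> 2"
  unfolding wgt_def by (rule two_ind)

lemma Ev_repr:
  assumes sym: "\<forall>i<n. \<forall>j<n. P (z i) (z j) = P (z j) (z i)"
  shows "Ev n P e z a b = (\<Sum>x\<in>Iset n. wgt e a b x * P (z (fst x)) (z (snd x)))"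
proof -
  have "Ev n P e z a b = (\<Sum>x\<in>Iset n. (if fst x \<noteq> snd x \<and> e (fst x) = a \<and> e (snd x) = b then P (z (fst x)) (z (snd x)) else 0)
        + (if snd x \<noteq> fst x \<and> e (snd x) = a \<and> e (fst x) = b then P (z (snd x)) (z (fst x)) else 0))"
    unfolding Ev_def by (rule pair_sum) simp
  also have "\<dots> = (\<Sum>x\<in>Iset n. wgt e a b x * P (z (fst x)) (z (snd x)))"
  proof (intro sum.cong refl)
    fix x assume "x \<in> Iset n"
    then obtain i j where x: "x = (i, j)" "i < j" "j < n" by (auto simp: Iset_def)
    then have s: "P (z j) (z i) = P (z i) (z j)" using sym by simp
    have ij: "i \<noteq> j" "j \<noteq> i" using x by auto
    have c1: "(if i \<noteq> j \<and> C1 then p else 0) = (if C1 then p else (0::real))" for C1 p using ij by simp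
    have c2: "(if j \<noteq> i \<and> C1 then p else 0) = (if C1 then p else (0::real))" for C1 p using ij by simp
    show "(if fst x \<noteq> snd x \<and> e (fst x) = a \<and> e (snd x) = b then P (z (fst x)) (z (snd x)) else 0)
        + (if snd x \<noteq> fst x \<and> e (snd x) = a \<and> e (fst x) = b then P (z (snd x)) (z (fst x)) else 0)
        = wgt e a b x * P (z (fst x)) (z (snd x))"
      unfolding x(1) fst_conv snd_conv s wgt_def c1 c2 by (rule gen1)
  qed
  finally show ?thesis .
qed

lemma ocount_repr:
  "ocount n (symA U) e a b = (\<Sum>x\<in>Iset n. wgt e a b x * (if U x then 1 else 0))"
proof -
  have "ocount n (symA U) e a b = (\<Sum>x\<in>Iset n. (if e (fst x) = a \<and> e (snd x) = b \<and> symA U (fst x) (snd x) then 1 else 0)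
        + (if e (snd x) = a \<and> e (fst x) = b \<and> symA U (snd x) (fst x) then 1 else 0))"
    unfolding ocount_def by (rule pair_sum) (simp add: symA_def)
  also have "\<dots> = (\<Sum>x\<in>Iset n. wgt e a b x * (if U x then 1 else 0))"
  proof (intro sum.cong refl)
    fix x assume "x \<in> Iset n"
    then obtain i j where x: "x = (i, j)" "i < j" "j < n" by (auto simp: Iset_def)
    have s1: "symA U i j = U (i,j)" "symA U j i = U (i,j)" using x by (auto simp: symA_def)
    show "(if e (fst x) = a \<and> e (snd x) = b \<and> symA U (fst x) (snd x) then 1 else 0)
        + (if e (snd x) = a \<and> e (fst x) = b \<and> symA U (snd x) (fst x) then 1 else 0)
        = wgt e a b x * (if U x then 1 else (0::real))"
      unfolding x(1) fst_conv snd_conv s1 wgt_def conj_assoc[symmetric] by (rule gen2)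
  qed
  finally show ?thesis .
qed

lemma D_repr:
  assumes sym: "\<forall>i<n. \<forall>j<n. P (z i) (z j) = P (z j) (z i)"
  shows "ocount n (symA U) e a b - Ev n P e z a b
       = (\<Sum>x\<in>Iset n. wgt e a b x * ((if U x then 1 else 0) - P (z (fst x)) (z (snd x))))"
  unfolding ocount_repr Ev_repr[where P=P and z=z and n=n, OF sym] by (simp add: sum_subtractf[symmetric] right_diff_distrib)

lemma edge_tail:
  assumes sym: "\<forall>i<n. \<forall>j<n. P (z i) (z j) = P (z j) (z i)"
    and p: "\<forall>i<n. \<forall>j<n. 0 \<le> P (z i) (z j) \<and> P (z i) (z j) \<le> 1"
    and lam: "0 < l" "l \<le> 1/2" and sig: "\<bar>\<sigma>\<bar> = 1"
  shows "measure_pmf.prob (Pi_pmf (Iset n) False (\<lambda>(i,j). bernoulli_pmf (P (z i) (z j))))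
           {U. t \<le> \<sigma> * (ocount n (symA U) e a b - Ev n P e z a b)}
         \<le> exp (2 * l\<^sup>2 * Ev n P e z a b - l * t)"
proof -
  have "measure_pmf.prob (Pi_pmf (Iset n) False (\<lambda>(i,j). bernoulli_pmf (P (z i) (z j))))
           {U. t \<le> \<sigma> * (\<Sum>x\<in>Iset n. wgt e a b x * ((if (\<lambda>x v. v) x (U x) then 1 else 0) - P (z (fst x)) (z (snd x))))}
         \<le> exp (2 * l\<^sup>2 * (\<Sum>x\<in>Iset n. wgt e a b x * P (z (fst x)) (z (snd x))) - l * t)"
    by (rule chernoff_gen[OF Iset_finite _ _ _ lam sig])
       (use p in \<open>auto simp: wgt_bounds Iset_def split: prod.splits\<close>)
  note fact = this
  show ?thesis unfolding D_repr[where P=P and z=z and n=n, OF sym] using fact unfolding Ev_repr[where P=P and z=z and n=n, OF sym] by simp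
qed

lemma sq_tail:
  fixes t \<mu> :: real
  assumes sym: "\<forall>i<n. \<forall>j<n. P (z i) (z j) = P (z j) (z i)"
    and p: "\<forall>i<n. \<forall>j<n. 0 \<le> P (z i) (z j) \<and> P (z i) (z j) \<le> 1"
    and t: "t > 0" and mu: "\<mu> > 0" and E0: "0 \<le> Ev n P e z a b" and EU: "Ev n P e z a b \<le> \<mu>"
  shows "measure_pmf.prob (Pi_pmf (Iset n) False (\<lambda>(i,j). bernoulli_pmf (P (z i) (z j))))
           {U. t\<^sup>2 < (ocount n (symA U) e a b - Ev n P e z a b)\<^sup>2}
         \<le> 2 * exp (- min (t\<^sup>2 / (8 * \<mu>)) (t / 4))"
proof -
  define E where "E = Ev n P e z a b"
  define M where "M = Pi_pmf (Iset n) False (\<lambda>(i,j). bernoulli_pmf (P (z i) (z j)))"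
  obtain l where l: "0 < l" "l \<le> 1/2" and lb: "2 * l\<^sup>2 * E - l * t \<le> - min (t\<^sup>2 / (8 * \<mu>)) (t / 4)"
  proof (cases "t \<le> 2 * \<mu>")
    case True
    define l where "l = t / (4 * \<mu>)"
    have l0: "0 < l" using t mu by (simp add: l_def)
    have l1: "l \<le> 1/2" using True mu by (simp add: l_def field_simps)
    have "2 * l\<^sup>2 * E - l * t \<le> 2 * l\<^sup>2 * \<mu> - l * t"
      using EU unfolding E_def[symmetric] by (simp add: mult_left_mono)
    also have "\<dots> = - (t\<^sup>2 / (8 * \<mu>))" using mu by (simp add: l_def field_simps power2_eq_square)
    also have "\<dots> \<le> - min (t\<^sup>2 / (8 * \<mu>)) (t / 4)" by simp
    finally show ?thesis using that l0 l1 by blast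
  next
    case False
    have "2 * (1/2)\<^sup>2 * E - 1/2 * t \<le> 2 * (1/2)\<^sup>2 * \<mu> - 1/2 * t"
      using EU unfolding E_def[symmetric] by simp
    also have "\<dots> \<le> - (t / 4)" using False by (simp add: power2_eq_square)
    also have "\<dots> \<le> - min (t\<^sup>2 / (8 * \<mu>)) (t / 4)" by simp
    finally show ?thesis using that[of "1/2"] by simp
  qed
  have sub: "{U. t\<^sup>2 < (ocount n (symA U) e a b - E)\<^sup>2}
      \<subseteq> {U. t \<le> 1 * (ocount n (symA U) e a b - E)} \<union> {U. t \<le> (-1) * (ocount n (symA U) e a b - E)}"
  proof
    fix U assume "U \<in> {U. t\<^sup>2 < (ocount n (symA U) e a b - E)\<^sup>2}"
    then have "t\<^sup>2 < (ocount n (symA U) e a b - E)\<^sup>2" by simp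
    then have "t < \<bar>ocount n (symA U) e a b - E\<bar>" using t by (metis abs_of_pos power2_abs power_less_imp_less_base abs_ge_zero)
    then show "U \<in> {U. t \<le> 1 * (ocount n (symA U) e a b - E)} \<union> {U. t \<le> (-1) * (ocount n (symA U) e a b - E)}"
      by auto
  qed
  have "measure_pmf.prob M {U. t\<^sup>2 < (ocount n (symA U) e a b - E)\<^sup>2}
      \<le> measure_pmf.prob M ({U. t \<le> 1 * (ocount n (symA U) e a b - E)} \<union> {U. t \<le> (-1) * (ocount n (symA U) e a b - E)})"
    by (rule measure_pmf.finite_measure_mono[OF sub]) simp
  also have "\<dots> \<le> measure_pmf.prob M {U. t \<le> 1 * (ocount n (symA U) e a b - E)} + measure_pmf.prob M {U. t \<le> (-1) * (ocount n (symA U) e a b - E)}"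
    by (rule measure_Un_le) simp_all
  also have "\<dots> \<le> exp (2 * l\<^sup>2 * E - l * t) + exp (2 * l\<^sup>2 * E - l * t)"
    unfolding M_def E_def by (intro add_mono edge_tail[where P=P and z=z and n=n, OF sym p l]) simp_all
  also have "\<dots> \<le> 2 * exp (- min (t\<^sup>2 / (8 * \<mu>)) (t / 4))" using lb by simp
  finally show ?thesis unfolding M_def E_def .
qed

lemma restrict_quantities:
  assumes "\<forall>i<n. e i = e' i"
  shows "ncount n e a = ncount n e' a" "npair n e a b = npair n e' a b"
    "ocount n A e a b = ocount n A e' a b" "Ev n P e z a b = Ev n P e' z a b"
proof -
  show c: "ncount n e a = ncount n e' a" for a
    unfolding ncount_sum using assms by (intro sum.cong) auto
  show "npair n e a b = npair n e' a b" unfolding npair_def c ..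
  show "ocount n A e a b = ocount n A e' a b"
    unfolding ocount_def using assms by (intro sum.cong refl) auto
  show "Ev n P e z a b = Ev n P e' z a b"
    unfolding Ev_def using assms by (intro sum.cong refl) auto
qed

lemma map_pmf_eq_bern: "map_pmf (\<lambda>v. v = a) \<pi> = bernoulli_pmf (pmf \<pi> a)"
proof (rule pmf_eqI)
  fix b :: bool
  have q: "0 \<le> pmf \<pi> a" "pmf \<pi> a \<le> 1" by (auto simp: pmf_le_1)
  show "pmf (map_pmf (\<lambda>v. v = a) \<pi>) b = pmf (bernoulli_pmf (pmf \<pi> a)) b"
  proof (cases b)
    case True
    have "(\<lambda>v. v = a) -` {b} = {a}" using True by auto
    then show ?thesis using True q by (simp add: pmf_map measure_pmf_single)
  next
    case False
    have "(\<lambda>v. v = a) -` {b} = space (measure_pmf \<pi>) - {a}" using False by auto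
    then have "pmf (map_pmf (\<lambda>v. v = a) \<pi>) b = 1 - measure_pmf.prob \<pi> {a}"
      using measure_pmf.prob_compl[of "{a}" \<pi>] by (simp add: pmf_map)
    then show ?thesis using False q by (simp add: measure_pmf_single)
  qed
qed

lemma z_tail:
  fixes \<beta> :: real
  assumes b0: "0 < \<beta>" and b1: "\<beta> \<le> 1" and bq: "2 * \<beta> \<le> pmf \<pi> a"
  shows "measure_pmf.prob (Pi_pmf {0..<n} d (\<lambda>_. \<pi>)) {z. ncount n z a < \<beta> * real n} \<le> exp (- (\<beta>\<^sup>2 / 8) * real n)"
proof -
  define q where "q = pmf \<pi> a"
  have q: "0 \<le> q" "q \<le> 1" by (auto simp: q_def pmf_le_1)
  have nc: "ncount n z a = (\<Sum>i\<in>{0..<n}. (if z i = a then 1 else 0))" for z :: "nat \<Rightarrow> nat"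
    by (simp add: ncount_sum atLeast0LessThan)
  have sub: "{z. ncount n z a < \<beta> * real n}
     \<subseteq> {z. \<beta> * real n \<le> (-1) * (\<Sum>i\<in>{0..<n}. 1 * ((if (\<lambda>_ v. v = a) i (z i) then 1 else 0) - (\<lambda>_. q) i))}"
  proof
    fix z :: "nat \<Rightarrow> nat" assume "z \<in> {z. ncount n z a < \<beta> * real n}"
    then have lt: "ncount n z a < \<beta> * real n" by simp
    have "(\<Sum>i\<in>{0..<n}. 1 * ((if z i = a then 1 else 0) - q)) = ncount n z a - real n * q"
      by (simp add: nc sum_subtractf)
    moreover have "2 * \<beta> * real n \<le> q * real n" using bq q_def by (simp add: mult_right_mono)
    ultimately show "z \<in> {z. \<beta> * real n \<le> (-1) * (\<Sum>i\<in>{0..<n}. 1 * ((if (\<lambda>_ v. v = a) i (z i) then 1 else 0) - (\<lambda>_. q) i))}"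
      using lt by (simp add: algebra_simps)
  qed
  have "measure_pmf.prob (Pi_pmf {0..<n} d (\<lambda>_. \<pi>)) {z. ncount n z a < \<beta> * real n}
     \<le> measure_pmf.prob (Pi_pmf {0..<n} d (\<lambda>_. \<pi>))
         {z. \<beta> * real n \<le> (-1) * (\<Sum>i\<in>{0..<n}. 1 * ((if (\<lambda>_ v. v = a) i (z i) then 1 else 0) - (\<lambda>_. q) i))}"
    by (rule measure_pmf.finite_measure_mono[OF sub]) simp
  also have "\<dots> \<le> exp (2 * (\<beta>/4)\<^sup>2 * (\<Sum>i\<in>{0..<n}. 1 * q) - (\<beta>/4) * (\<beta> * real n))"
    by (rule chernoff_gen) (use q b0 b1 in \<open>auto simp: q_def map_pmf_eq_bern\<close>)
  also have "\<dots> \<le> exp (- (\<beta>\<^sup>2 / 8) * real n)"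
  proof -
    have "2 * (\<beta>/4)\<^sup>2 * (\<Sum>i\<in>{0..<n}. 1 * q) = \<beta>\<^sup>2 / 8 * (q * real n)" by (simp add: power2_eq_square)
    also have "\<dots> \<le> \<beta>\<^sup>2 / 8 * real n" using q by (intro mult_left_mono) (auto simp: mult_left_le_one_le)
    finally show ?thesis by (simp add: power2_eq_square algebra_simps)
  qed
  finally show ?thesis .
qed

definition goodE :: "nat \<Rightarrow> nat \<Rightarrow> (nat \<Rightarrow> nat \<Rightarrow> real) \<Rightarrow> real \<Rightarrow> real \<Rightarrow> real \<Rightarrow> (nat \<Rightarrow> nat) \<Rightarrow> (nat \<Rightarrow> nat \<Rightarrow> bool) \<Rightarrow> bool" where
  "goodE k n P \<gamma> \<rho> \<alpha> z A \<longleftrightarrow> (\<forall>e. (\<forall>i<n. e i < k) \<longrightarrow> (\<forall>a<k. \<alpha> * real n \<le> ncount n e a) \<longrightarrow>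
      (\<forall>a<k. \<forall>b<k. (ocount n A e a b - Ev n P e z a b)\<^sup>2 \<le> \<gamma>\<^sup>2 * \<rho>\<^sup>2 * (real n)\<^sup>2 * npair n e a b))"

lemma npair_sqrt_lb:
  fixes \<alpha> :: real
  assumes a2: "2 \<le> \<alpha> * real n" and ca: "\<alpha> * real n \<le> ncount n e a" and cb: "\<alpha> * real n \<le> ncount n e b"
  shows "(\<alpha> * real n - 1)\<^sup>2 \<le> npair n e a b"
proof (cases "a = b")
  case True
  have "(\<alpha> * real n - 1)\<^sup>2 \<le> (ncount n e a - 1) * (ncount n e a - 1)"
    using a2 ca by (simp add: power2_eq_square mult_mono)
  also have "\<dots> \<le> ncount n e a * (ncount n e a - 1)" using a2 ca by (intro mult_right_mono) auto
  finally show ?thesis using True by (simp add: npair_def)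
next
  case False
  have "(\<alpha> * real n - 1)\<^sup>2 \<le> (\<alpha> * real n) * (\<alpha> * real n)" using a2 by (simp add: power2_eq_square mult_mono)
  also have "\<dots> \<le> ncount n e a * ncount n e b" using a2 ca cb by (intro mult_mono) auto
  finally show ?thesis using False by (simp add: npair_def)
qed

lemma E_bound:
  fixes \<rho> smin smax \<gamma> \<alpha> :: real
  assumes z: "\<forall>i<n. z i < k" and \<rho>: "\<rho> > 0" and half: "\<rho> * smax \<le> 1/2" and smin: "smin > 0"
    and S: "\<forall>c<k. \<forall>d<k. smin \<le> S c d \<and> S c d \<le> smax" and Ssym: "\<forall>c<k. \<forall>d<k. S c d = S d c"
    and \<gamma>: "\<gamma> > 0" and a2: "2 \<le> \<alpha> * real n" and smax: "smax > 0"
  shows "measure_pmf.prob (Pi_pmf (Iset n) False (\<lambda>(i,j). bernoulli_pmf (\<rho> * S (z i) (z j))))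
           {U. \<not> goodE k n (\<lambda>c d. \<rho> * S c d) \<gamma> \<rho> \<alpha> z (symA U)}
         \<le> real (k ^ n * k * k) * (2 * exp (- min (\<gamma>\<^sup>2 * \<rho> * (real n)\<^sup>2 / (8 * smax)) (\<gamma> * \<rho> * real n * (\<alpha> * real n - 1) / 4)))"
proof -
  define P where "P = (\<lambda>c d. \<rho> * S c d)"
  define M where "M = Pi_pmf (Iset n) False (\<lambda>(i,j). bernoulli_pmf (P (z i) (z j)))"
  define h where "h = min (\<gamma>\<^sup>2 * \<rho> * (real n)\<^sup>2 / (8 * smax)) (\<gamma> * \<rho> * real n * (\<alpha> * real n - 1) / 4)"
  define T where "T = {(e, a, b). e \<in> ({0..<n} \<rightarrow>\<^sub>E {0..<k}) \<and> (\<forall>c<k. \<alpha> * real n \<le> ncount n e c) \<and> a < k \<and> b < k}"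
  define B where "B x = (case x of (e, a, b) \<Rightarrow> {U. \<gamma>\<^sup>2 * \<rho>\<^sup>2 * (real n)\<^sup>2 * npair n e a b < (ocount n (symA U) e a b - Ev n P e z a b)\<^sup>2})" for x
  have Tsub: "T \<subseteq> ({0..<n} \<rightarrow>\<^sub>E {0..<k}) \<times> {..<k} \<times> {..<k}" by (auto simp: T_def)
  have finT: "finite T" by (rule finite_subset[OF Tsub]) (auto intro!: finite_PiE)
  have cardT: "card T \<le> k ^ n * k * k"
  proof -
    have "card T \<le> card (({0..<n} \<rightarrow>\<^sub>E {0..<k}) \<times> {..<k} \<times> {..<k})"
      by (rule card_mono[OF _ Tsub]) (auto intro!: finite_PiE)
    also have "\<dots> = k ^ n * k * k" by (simp add: card_cartesian_product card_PiE)
    finally show ?thesis .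
  qed
  have sub: "{U. \<not> goodE k n P \<gamma> \<rho> \<alpha> z (symA U)} \<subseteq> (\<Union>x\<in>T. B x)"
  proof
    fix U assume "U \<in> {U. \<not> goodE k n P \<gamma> \<rho> \<alpha> z (symA U)}"
    then obtain e a b where e: "\<forall>i<n. e i < k" and ce: "\<forall>c<k. \<alpha> * real n \<le> ncount n e c" and ab: "a < k" "b < k"
      and bad: "\<not> (ocount n (symA U) e a b - Ev n P e z a b)\<^sup>2 \<le> \<gamma>\<^sup>2 * \<rho>\<^sup>2 * (real n)\<^sup>2 * npair n e a b"
      by (auto simp: goodE_def)
    define e' where "e' = restrict e {0..<n}"
    have ee: "\<forall>i<n. e i = e' i" by (simp add: e'_def)
    note rq = restrict_quantities[OF ee]
    have "e' \<in> {0..<n} \<rightarrow>\<^sub>E {0..<k}" using e by (auto simp: e'_def)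
    then have "(e', a, b) \<in> T" using ce ab rq(1) by (auto simp: T_def)
    moreover have "U \<in> B (e', a, b)" using bad by (simp add: B_def rq not_le)
    ultimately show "U \<in> (\<Union>x\<in>T. B x)" by blast
  qed
  have each: "measure_pmf.prob M (B x) \<le> 2 * exp (- h)" if x: "x \<in> T" for x
  proof -
    obtain e a b where xe: "x = (e, a, b)" and e: "e \<in> ({0..<n} \<rightarrow>\<^sub>E {0..<k})"
      and ce: "\<forall>c<k. \<alpha> * real n \<le> ncount n e c" and ab: "a < k" "b < k"
      using x by (auto simp: T_def)
    define N where "N = npair n e a b"
    have Nlb: "(\<alpha> * real n - 1)\<^sup>2 \<le> N" unfolding N_def
      by (rule npair_sqrt_lb[OF a2]) (use ce ab in auto)
    have Npos: "N > 0"
    proof -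
      have "1 * 1 \<le> (\<alpha> * real n - 1) * (\<alpha> * real n - 1)" using a2 by (intro mult_mono) auto
      then have "1 \<le> (\<alpha> * real n - 1)\<^sup>2" by (simp add: power2_eq_square)
      then show ?thesis using Nlb by simp
    qed
    define t where "t = \<gamma> * \<rho> * real n * sqrt N"
    define \<mu> where "\<mu> = \<rho> * smax * N"
    have npos: "real n > 0" using a2 by (cases n) auto
    have t0: "t > 0" using \<gamma> \<rho> npos Npos by (simp add: t_def)
    have mu0: "\<mu> > 0" using \<rho> smax Npos by (simp add: \<mu>_def)
    have Pb: "\<forall>i<n. \<forall>j<n. \<rho> * smin \<le> P (z i) (z j) \<and> P (z i) (z j) \<le> \<rho> * smax"
      using S z \<rho> by (auto simp: P_def)
    have E0: "0 \<le> Ev n P e z a b"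
      using Ev_bounds(1)[where n=n and P=P and z=z and L="\<rho> * smin" and U="\<rho> * smax" and e=e and a=a and b=b] Pb \<rho> smin Npos
      unfolding N_def by (smt (verit) mult_pos_pos)
    have EU: "Ev n P e z a b \<le> \<mu>"
      using Ev_bounds(2)[where n=n and P=P and z=z and L="\<rho> * smin" and U="\<rho> * smax" and e=e and a=a and b=b] Pb
      unfolding \<mu>_def N_def by simp
    have sym: "\<forall>i<n. \<forall>j<n. P (z i) (z j) = P (z j) (z i)" using Ssym z by (simp add: P_def)
    have p01: "\<forall>i<n. \<forall>j<n. 0 \<le> P (z i) (z j) \<and> P (z i) (z j) \<le> 1"
    proof (intro allI impI conjI)
      fix i j assume "i < n" "j < n"
      then show "0 \<le> P (z i) (z j)" using Pb \<rho> smin by (smt (verit) mult_pos_pos)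
      show "P (z i) (z j) \<le> 1" using Pb half \<open>i < n\<close> \<open>j < n\<close> by fastforce
    qed
    have t2: "t\<^sup>2 = \<gamma>\<^sup>2 * \<rho>\<^sup>2 * (real n)\<^sup>2 * N" using Npos by (simp add: t_def power_mult_distrib)
    have "measure_pmf.prob M (B x) \<le> 2 * exp (- min (t\<^sup>2 / (8 * \<mu>)) (t / 4))"
      unfolding M_def B_def xe prod.case t2[symmetric] N_def[symmetric]
      using sq_tail[where P=P and z=z and n=n, OF sym p01 t0 mu0 E0 EU] unfolding N_def by simp
    also have "\<dots> \<le> 2 * exp (- h)"
    proof -
      have m1: "t\<^sup>2 / (8 * \<mu>) = \<gamma>\<^sup>2 * \<rho> * (real n)\<^sup>2 / (8 * smax)"
        unfolding t2 \<mu>_def using Npos \<rho> smax by (simp add: field_simps power2_eq_square)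
      have "\<alpha> * real n - 1 \<le> sqrt N" using Nlb by (rule real_le_rsqrt)
      then have m2: "\<gamma> * \<rho> * real n * (\<alpha> * real n - 1) / 4 \<le> t / 4"
        unfolding t_def using \<gamma> \<rho> npos by (intro divide_right_mono mult_left_mono) auto
      have "h \<le> min (t\<^sup>2 / (8 * \<mu>)) (t / 4)" unfolding h_def m1 using m2 by linarith
      then show ?thesis by simp
    qed
    finally show ?thesis .
  qed
  have "measure_pmf.prob M {U. \<not> goodE k n P \<gamma> \<rho> \<alpha> z (symA U)} \<le> measure_pmf.prob M (\<Union>x\<in>T. B x)"
    by (rule measure_pmf.finite_measure_mono[OF sub]) simp
  also have "\<dots> \<le> (\<Sum>x\<in>T. measure_pmf.prob M (B x))"
    by (rule measure_UNION_le[OF finT]) simp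
  also have "\<dots> \<le> (\<Sum>x\<in>T. 2 * exp (- h))" by (rule sum_mono) (rule each)
  also have "\<dots> = real (card T) * (2 * exp (- h))" by simp
  also have "\<dots> \<le> real (k ^ n * k * k) * (2 * exp (- h))"
    using cardT by (intro mult_right_mono) (auto simp del: of_nat_mult)
  finally show ?thesis unfolding M_def P_def h_def .
qed

definition goodN :: "nat \<Rightarrow> nat \<Rightarrow> (nat \<Rightarrow> nat \<Rightarrow> real) \<Rightarrow> real \<Rightarrow> real \<Rightarrow> real \<Rightarrow> real \<Rightarrow> (nat \<Rightarrow> nat) \<Rightarrow> (nat \<Rightarrow> nat \<Rightarrow> bool) \<Rightarrow> bool" where
  "goodN k n P \<gamma> \<rho> \<alpha> \<beta> z A \<longleftrightarrow> (\<forall>i<n. z i < k) \<and> (\<forall>i. \<not> A i i) \<and> (\<forall>a<k. \<beta> * real n \<le> ncount n z a)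
      \<and> goodE k n P \<gamma> \<rho> \<alpha> z A"

lemma sbm_bind:
  "sbm_pmf \<pi> P n = bind_pmf (Pi_pmf {0..<n} 0 (\<lambda>_. \<pi>))
     (\<lambda>z. map_pmf (\<lambda>U. (z, symA U)) (Pi_pmf (Iset n) False (\<lambda>(i,j). bernoulli_pmf (P (z i) (z j)))))"
  unfolding sbm_pmf_def map_pmf_def symA_def Iset_def ..

lemma fst_sbm: "map_pmf fst (sbm_pmf \<pi> P n) = Pi_pmf {0..<n} 0 (\<lambda>_. \<pi>)"
  unfolding sbm_bind map_bind_pmf map_pmf_comp by (simp add: bind_return_pmf')

lemma z_bad_bound:
  fixes \<beta> :: real
  assumes setpi: "set_pmf \<pi> = {0..<k}" and b0: "0 < \<beta>" and b1: "\<beta> \<le> 1" and bq: "\<forall>a<k. 2 * \<beta> \<le> pmf \<pi> a"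
  shows "measure_pmf.prob (Pi_pmf {0..<n} 0 (\<lambda>_. \<pi>)) {z. \<not> (\<forall>i<n. z i < k) \<or> (\<exists>a<k. ncount n z a < \<beta> * real n)}
         \<le> real k * exp (- (\<beta>\<^sup>2 / 8) * real n)"
proof -
  define M where "M = Pi_pmf {0..<n} 0 (\<lambda>_. \<pi>)"
  define X where "X = {z. \<not> (\<forall>i<n. z i < k) \<or> (\<exists>a<k. ncount n z a < \<beta> * real n)}"
  have sp: "set_pmf M = PiE_dflt {0..<n} 0 (\<lambda>_. {0..<k})"
    unfolding M_def by (simp add: set_Pi_pmf setpi comp_def)
  have sub: "X \<inter> set_pmf M \<subseteq> (\<Union>a\<in>{..<k}. {z. ncount n z a < \<beta> * real n})"
    unfolding sp X_def PiE_dflt_def by auto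
  have "measure_pmf.prob M X = measure_pmf.prob M (X \<inter> set_pmf M)" by (simp add: measure_Int_set_pmf)
  also have "\<dots> \<le> measure_pmf.prob M (\<Union>a\<in>{..<k}. {z. ncount n z a < \<beta> * real n})"
    by (rule measure_pmf.finite_measure_mono[OF sub]) simp
  also have "\<dots> \<le> (\<Sum>a\<in>{..<k}. measure_pmf.prob M {z. ncount n z a < \<beta> * real n})"
    by (rule measure_UNION_le) auto
  also have "\<dots> \<le> (\<Sum>a\<in>{..<k}. exp (- (\<beta>\<^sup>2 / 8) * real n))"
    unfolding M_def by (intro sum_mono z_tail b0 b1) (use bq in auto)
  also have "\<dots> = real k * exp (- (\<beta>\<^sup>2 / 8) * real n)" by simp
  finally show ?thesis unfolding M_def X_def .
qed

lemma bad_bound: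
  fixes \<rho> smin smax \<gamma> \<alpha> \<beta> :: real
  assumes setpi: "set_pmf \<pi> = {0..<k}" and b0: "0 < \<beta>" and b1: "\<beta> \<le> 1" and bq: "\<forall>a<k. 2 * \<beta> \<le> pmf \<pi> a"
    and \<rho>: "\<rho> > 0" and half: "\<rho> * smax \<le> 1/2" and smin: "smin > 0"
    and S: "\<forall>c<k. \<forall>d<k. smin \<le> S c d \<and> S c d \<le> smax" and Ssym: "\<forall>c<k. \<forall>d<k. S c d = S d c"
    and \<gamma>: "\<gamma> > 0" and a2: "2 \<le> \<alpha> * real n" and smax: "smax > 0"
  shows "measure_pmf.prob (sbm_pmf \<pi> (\<lambda>c d. \<rho> * S c d) n) {x. \<not> goodN k n (\<lambda>c d. \<rho> * S c d) \<gamma> \<rho> \<alpha> \<beta> (fst x) (snd x)}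
     \<le> real k * exp (- (\<beta>\<^sup>2 / 8) * real n)
       + real (k ^ n * k * k) * (2 * exp (- min (\<gamma>\<^sup>2 * \<rho> * (real n)\<^sup>2 / (8 * smax)) (\<gamma> * \<rho> * real n * (\<alpha> * real n - 1) / 4)))"
proof -
  define P where "P = (\<lambda>c d. \<rho> * S c d)"
  define c where "c = real (k ^ n * k * k) * (2 * exp (- min (\<gamma>\<^sup>2 * \<rho> * (real n)\<^sup>2 / (8 * smax)) (\<gamma> * \<rho> * real n * (\<alpha> * real n - 1) / 4)))"
  define SB where "SB = sbm_pmf \<pi> P n"
  define ZF where "ZF = {z. \<not> (\<forall>i<n. z i < k) \<or> (\<exists>a<k. ncount n z a < \<beta> * real n)}"
  define BE where "BE = {x. (\<forall>i<n. fst x i < k) \<and> ((\<exists>i. snd x i i) \<or> \<not> goodE k n P \<gamma> \<rho> \<alpha> (fst x) (snd x))}"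
  have sub: "{x. \<not> goodN k n P \<gamma> \<rho> \<alpha> \<beta> (fst x) (snd x)} \<subseteq> fst -` ZF \<union> BE"
    by (auto simp: goodN_def ZF_def BE_def not_le)
  have pZ: "measure_pmf.prob SB (fst -` ZF) \<le> real k * exp (- (\<beta>\<^sup>2 / 8) * real n)"
  proof -
    have "measure_pmf.prob SB (fst -` ZF) = measure_pmf.prob (map_pmf fst SB) ZF" by simp
    also have "\<dots> = measure_pmf.prob (Pi_pmf {0..<n} 0 (\<lambda>_. \<pi>)) ZF" unfolding SB_def fst_sbm ..
    also have "\<dots> \<le> real k * exp (- (\<beta>\<^sup>2 / 8) * real n)" unfolding ZF_def by (rule z_bad_bound[OF setpi b0 b1 bq])
    finally show ?thesis .
  qed
  have c0: "0 \<le> c" unfolding c_def by simp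
  have inner: "emeasure (Pi_pmf (Iset n) False (\<lambda>(i,j). bernoulli_pmf (P (z i) (z j)))) ((\<lambda>U. (z, symA U)) -` BE) \<le> ennreal c" for z
  proof (cases "\<forall>i<n. z i < k")
    case True
    have "(\<lambda>U. (z, symA U)) -` BE = {U. \<not> goodE k n P \<gamma> \<rho> \<alpha> z (symA U)}"
      using True by (auto simp: BE_def symA_def)
    moreover have "measure_pmf.prob (Pi_pmf (Iset n) False (\<lambda>(i,j). bernoulli_pmf (P (z i) (z j)))) {U. \<not> goodE k n P \<gamma> \<rho> \<alpha> z (symA U)} \<le> c"
      unfolding P_def c_def by (rule E_bound[OF True \<rho> half smin S Ssym \<gamma> a2 smax])
    ultimately show ?thesis by (simp add: measure_pmf.emeasure_eq_measure ennreal_leI)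
  next
    case False
    then have "(\<lambda>U. (z, symA U)) -` BE = {}" by (auto simp: BE_def)
    then show ?thesis by simp
  qed
  have pE: "measure_pmf.prob SB BE \<le> c"
  proof -
    have "emeasure (measure_pmf SB) BE = (\<integral>\<^sup>+z. emeasure (map_pmf (\<lambda>U. (z, symA U)) (Pi_pmf (Iset n) False (\<lambda>(i,j). bernoulli_pmf (P (z i) (z j))))) BE \<partial>(Pi_pmf {0..<n} 0 (\<lambda>_. \<pi>)))"
      unfolding SB_def sbm_bind by (rule emeasure_bind_pmf)
    also have "\<dots> \<le> (\<integral>\<^sup>+z. ennreal c \<partial>(Pi_pmf {0..<n} 0 (\<lambda>_. \<pi>)))"
      by (intro nn_integral_mono) (simp add: inner)
    also have "\<dots> = ennreal c" by (simp add: measure_pmf.emeasure_space_1)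
    finally show ?thesis using c0 by (simp add: measure_pmf.emeasure_eq_measure)
  qed
  have "measure_pmf.prob SB {x. \<not> goodN k n P \<gamma> \<rho> \<alpha> \<beta> (fst x) (snd x)} \<le> measure_pmf.prob SB (fst -` ZF \<union> BE)"
    by (rule measure_pmf.finite_measure_mono[OF sub]) simp
  also have "\<dots> \<le> measure_pmf.prob SB (fst -` ZF) + measure_pmf.prob SB BE"
    by (rule measure_Un_le) simp_all
  also have "\<dots> \<le> real k * exp (- (\<beta>\<^sup>2 / 8) * real n) + c" using pZ pE by simp
  finally show ?thesis unfolding SB_def P_def c_def .
qed

lemma asym_conds:
  fixes \<rho> \<alpha>s :: "nat \<Rightarrow> real" and \<beta> \<gamma> smax K :: real
  assumes \<rho>0: "\<rho> \<longlonglongrightarrow> 0" and n\<rho>: "filterlim (\<lambda>n. real n * \<rho> n) at_top sequentially"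
    and lim: "filterlim (\<lambda>n. \<alpha>s n * (real n * \<rho> n)) at_top sequentially"
    and b: "\<beta> > 0" and g: "\<gamma> > 0" and sm: "smax > 0" and ap: "\<forall>n. 0 < \<alpha>s n"
  shows "eventually (\<lambda>n. 0 < n \<and> 0 < \<rho> n \<and> \<rho> n * smax \<le> 1/2 \<and> 2 \<le> min (\<alpha>s n) \<beta> * real n \<and>
      real n * K \<le> min (\<gamma>\<^sup>2 * \<rho> n * (real n)\<^sup>2 / (8 * smax)) (\<gamma> * \<rho> n * real n * (min (\<alpha>s n) \<beta> * real n - 1) / 4)) sequentially"
proof -
  define K1 where "K1 = max 1 (8 * smax * K / \<gamma>\<^sup>2)"
  define K2 where "K2 = max 2 (4 * K / \<gamma> + 1)"
  have e1: "eventually (\<lambda>n. \<rho> n < min 1 (1 / (2 * smax))) sequentially"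
    using order_tendstoD(2)[OF \<rho>0, of "min 1 (1 / (2 * smax))"] sm by simp
  have e2: "eventually (\<lambda>n. K1 \<le> real n * \<rho> n) sequentially"
    using n\<rho> by (simp add: filterlim_at_top)
  have e3: "eventually (\<lambda>n. K2 \<le> \<alpha>s n * (real n * \<rho> n)) sequentially"
    using lim by (simp add: filterlim_at_top)
  have e4: "eventually (\<lambda>n. K2 / \<beta> \<le> real n * \<rho> n) sequentially"
    using n\<rho> by (simp add: filterlim_at_top)
  show ?thesis
  proof (rule eventually_mono[OF eventually_conj[OF e1 eventually_conj[OF e2 eventually_conj[OF e3 e4]]]])
    fix n assume H: "\<rho> n < min 1 (1 / (2 * smax)) \<and> K1 \<le> real n * \<rho> n \<and> K2 \<le> \<alpha>s n * (real n * \<rho> n) \<and> K2 / \<beta> \<le> real n * \<rho> n"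
    define r where "r = \<rho> n"
    define a where "a = min (\<alpha>s n) \<beta>"
    define x where "x = real n"
    have r1: "r < 1" and r2: "r < 1 / (2 * smax)" using H by (auto simp: r_def)
    have K1: "K1 \<le> x * r" using H by (simp add: x_def r_def)
    have "1 \<le> x * r" using K1 by (simp add: K1_def)
    have x0: "x > 0"
    proof (rule ccontr)
      assume "\<not> x > 0"
      then have "x = 0" using x_def by simp
      then show False using \<open>1 \<le> x * r\<close> by simp
    qed
    have r0: "r > 0" using zero_less_mult_pos[of x r] x0 \<open>1 \<le> x * r\<close> by simp
    have n0: "0 < n" using x0 x_def by simp
    have a0: "a > 0" using ap b by (simp add: a_def)
    have K2a: "K2 \<le> a * (x * r)"
    proof -
      have "K2 \<le> \<beta> * (x * r)" using H b by (simp add: x_def r_def field_simps)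
      moreover have "K2 \<le> \<alpha>s n * (x * r)" using H by (simp add: x_def r_def)
      ultimately show ?thesis unfolding a_def by (simp add: min_def)
    qed
    have ax: "a * x \<ge> a * x * r" using r1 a0 x0 by (simp add: mult_left_le)
    have c1: "2 \<le> a * x" using K2a ax by (simp add: K2_def mult_ac)
    have c2: "r * smax \<le> 1/2" using r2 sm by (simp add: field_simps)
    have h1: "x * K \<le> \<gamma>\<^sup>2 * r * x\<^sup>2 / (8 * smax)"
    proof -
      have "8 * smax * K / \<gamma>\<^sup>2 \<le> x * r" using K1 by (simp add: K1_def)
      then have "8 * smax * K \<le> \<gamma>\<^sup>2 * (x * r)" using g by (simp add: field_simps)
      then have "x * (8 * smax * K) \<le> x * (\<gamma>\<^sup>2 * (x * r))" using x0 by (intro mult_left_mono) auto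
      then show ?thesis using sm by (simp add: field_simps power2_eq_square)
    qed
    have h2: "x * K \<le> \<gamma> * r * x * (a * x - 1) / 4"
    proof -
      have "4 * K / \<gamma> + 1 \<le> a * (x * r)" using K2a by (simp add: K2_def)
      then have "4 * K / \<gamma> \<le> a * x * r - r" using r1 by (simp add: mult_ac)
      then have "4 * K \<le> \<gamma> * (a * x * r - r)" using g by (simp add: field_simps)
      then have "x * (4 * K) \<le> x * (\<gamma> * (a * x * r - r))" using x0 by (intro mult_left_mono) auto
      then show ?thesis by (simp add: field_simps)
    qed
    show "0 < n \<and> 0 < \<rho> n \<and> \<rho> n * smax \<le> 1/2 \<and> 2 \<le> min (\<alpha>s n) \<beta> * real n \<and>
      real n * K \<le> min (\<gamma>\<^sup>2 * \<rho> n * (real n)\<^sup>2 / (8 * smax)) (\<gamma> * \<rho> n * real n * (min (\<alpha>s n) \<beta> * real n - 1) / 4)"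
      using n0 r0 c1 c2 h1 h2 unfolding r_def a_def x_def by simp
  qed
qed

lemma final_step:
  fixes \<rho> smin smax \<gamma> \<alpha>' \<alpha> \<beta> :: real
  assumes G: "goodN k n (\<lambda>c d. \<rho> * S c d) \<gamma> \<rho> \<alpha>' \<beta> z A"
    and a1: "\<alpha>' \<le> \<alpha>" and a2: "\<alpha>' \<le> \<beta>" and n: "n > 0" and \<rho>: "\<rho> > 0" and half: "\<rho> * smax \<le> 1/2"
    and smin: "smin > 0" and S: "\<forall>c<k. \<forall>d<k. smin \<le> S c d \<and> S c d \<le> smax" and \<gamma>: "\<gamma> \<ge> 0"
    and e: "e \<in> Fset k n \<alpha>"
  shows "\<bar>Xfun k n (\<lambda>c d. \<rho> * S c d) A e z - Xfun k n (\<lambda>c d. \<rho> * S c d) A z z\<bar>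
         \<le> real k ^ 2 * \<rho> * ((\<bar>ln smin\<bar> + \<bar>ln smax\<bar> + ln 2) * \<gamma> + 2 * \<gamma>\<^sup>2 / smin)"
proof -
  have z: "\<forall>i<n. z i < k" and A: "\<forall>i. \<not> A i i" and zc: "\<forall>a<k. \<beta> * real n \<le> ncount n z a"
    and gE: "goodE k n (\<lambda>c d. \<rho> * S c d) \<gamma> \<rho> \<alpha>' z A"
    using G by (auto simp: goodN_def)
  have ek: "\<forall>i<n. e i < k" using e by (auto simp: Fset_def PiE_def Pi_def)
  have ec: "\<forall>a<k. \<alpha>' * real n \<le> ncount n e a"
  proof (intro allI impI)
    fix a assume "a < k"
    then have "\<alpha> * real n \<le> ncount n e a" using e by (auto simp: Fset_def)
    moreover have "\<alpha>' * real n \<le> \<alpha> * real n" using a1 by (intro mult_right_mono) auto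
    ultimately show "\<alpha>' * real n \<le> ncount n e a" by linarith
  qed
  have zc': "\<forall>a<k. \<alpha>' * real n \<le> ncount n z a"
  proof (intro allI impI)
    fix a assume "a < k"
    then have "\<beta> * real n \<le> ncount n z a" using zc by auto
    moreover have "\<alpha>' * real n \<le> \<beta> * real n" using a2 by (intro mult_right_mono) auto
    ultimately show "\<alpha>' * real n \<le> ncount n z a" by linarith
  qed
  have be: "\<forall>a<k. \<forall>b<k. (ocount n A e a b - Ev n (\<lambda>c d. \<rho> * S c d) e z a b)\<^sup>2 \<le> \<gamma>\<^sup>2 * \<rho>\<^sup>2 * (real n)\<^sup>2 * npair n e a b"
    using gE ek ec unfolding goodE_def by blast
  have bz: "\<forall>a<k. \<forall>b<k. (ocount n A z a b - Ev n (\<lambda>c d. \<rho> * S c d) z z a b)\<^sup>2 \<le> \<gamma>\<^sup>2 * \<rho>\<^sup>2 * (real n)\<^sup>2 * npair n z a b"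
    using gE z zc' unfolding goodE_def by blast
  show ?thesis by (rule det_main[OF n \<rho> smin half S z ek A \<gamma> be bz])
qed

lemma main_gen:
  fixes M :: "'w measure"
    and k :: nat and \<pi> :: "nat pmf" and S :: "nat \<Rightarrow> nat \<Rightarrow> real" and \<rho> :: "nat \<Rightarrow> real"
    and Zs :: "nat \<Rightarrow> 'w \<Rightarrow> (nat \<Rightarrow> nat)" and As :: "nat \<Rightarrow> 'w \<Rightarrow> (nat \<Rightarrow> nat \<Rightarrow> bool)"
    and \<alpha>s :: "nat \<Rightarrow> real" and \<delta> :: real
  assumes ps: "prob_space M" and k2: "k \<ge> 2" and setpi: "set_pmf \<pi> = {0..<k}"
    and Ssym: "\<forall>a<k. \<forall>b<k. S a b = S b a" and Spos: "\<forall>a<k. \<forall>b<k. S a b > 0"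
    and \<rho>0: "\<rho> \<longlonglongrightarrow> 0" and n\<rho>: "filterlim (\<lambda>n. real n * \<rho> n) at_top sequentially"
    and meas: "\<forall>n. (\<lambda>\<omega>. (Zs n \<omega>, As n \<omega>)) \<in> M \<rightarrow>\<^sub>M count_space UNIV"
    and dis: "\<forall>n. distr M (count_space UNIV) (\<lambda>\<omega>. (Zs n \<omega>, As n \<omega>))
              = measure_pmf (sbm_pmf \<pi> (\<lambda>a b. \<rho> n * S a b) n)"
    and ap: "\<forall>n. 0 < \<alpha>s n" and lim: "filterlim (\<lambda>n. \<alpha>s n * (real n * \<rho> n)) at_top sequentially"
    and \<delta>: "\<delta> > 0"
  shows "AE \<omega> in M. eventually (\<lambda>n.
           \<forall>e. (is_ML_est k (\<alpha>s n) n (As n \<omega>) e \<or> is_ICL_est k (\<alpha>s n) n (As n \<omega>) e) \<longrightarrow>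
             \<bar>Xfun k n (\<lambda>a b. \<rho> n * S a b) (As n \<omega>) e (Zs n \<omega>)
              - Xfun k n (\<lambda>a b. \<rho> n * S a b) (As n \<omega>) (Zs n \<omega>) (Zs n \<omega>)\<bar> < \<delta> * \<rho> n)
         sequentially"
proof -
  interpret prob_space M by (rule ps)
  have k0: "0 < k" using k2 by simp
  define SS where "SS = {S a b | a b. a < k \<and> b < k}"
  have SSeq: "SS = (\<lambda>(a,b). S a b) ` ({..<k} \<times> {..<k})" by (auto simp: SS_def)
  have finSS: "finite SS" unfolding SSeq by simp
  have S00: "S 0 0 \<in> SS" using k0 by (auto simp: SS_def)
  have neSS: "SS \<noteq> {}" using S00 by auto
  define smin where "smin = Min SS"
  define smax where "smax = Max SS"
  have Sb: "\<forall>c<k. \<forall>d<k. smin \<le> S c d \<and> S c d \<le> smax"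
    using finSS by (auto simp: smin_def smax_def SS_def intro!: Min_le Max_ge)
  have smin0: "smin > 0"
  proof -
    have "smin \<in> SS" unfolding smin_def using finSS neSS by (rule Min_in)
    then show ?thesis using Spos by (auto simp: SS_def)
  qed
  have smax0: "smax > 0" using Sb smin0 k0 by (meson order.strict_trans2)
  define qmin where "qmin = Min (pmf \<pi> ` {0..<k})"
  have qmin0: "qmin > 0"
  proof -
    have "qmin \<in> pmf \<pi> ` {0..<k}" unfolding qmin_def using k0 by (intro Min_in) auto
    then obtain a where "a < k" "qmin = pmf \<pi> a" by auto
    then show ?thesis using setpi by (simp add: pmf_positive)
  qed
  have qle: "qmin \<le> pmf \<pi> a" if "a < k" for a unfolding qmin_def using that by (intro Min_le) auto
  define \<beta> where "\<beta> = qmin / 2"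
  have b0: "\<beta> > 0" using qmin0 by (simp add: \<beta>_def)
  have b1: "\<beta> \<le> 1" using qle[of 0] k0 pmf_le_1[of \<pi> 0] by (simp add: \<beta>_def)
  have bq: "\<forall>a<k. 2 * \<beta> \<le> pmf \<pi> a" using qle by (simp add: \<beta>_def)
  define Cc where "Cc = \<bar>ln smin\<bar> + \<bar>ln smax\<bar> + ln 2"
  define c0 where "c0 = real k ^ 2 * (Cc + 2 / smin)"
  have Cc0: "Cc \<ge> 0" by (simp add: Cc_def)
  have c00: "c0 > 0" using k0 smin0 Cc0 by (simp add: c0_def add_nonneg_pos)
  define \<gamma> where "\<gamma> = min 1 (\<delta> / (2 * c0))"
  have g0: "\<gamma> > 0" using \<delta> c00 by (simp add: \<gamma>_def)
  have gle: "real k ^ 2 * (Cc * \<gamma> + 2 * \<gamma>\<^sup>2 / smin) < \<delta>"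
  proof -
    have "\<gamma> \<le> 1" by (simp add: \<gamma>_def)
    then have "\<gamma>\<^sup>2 \<le> \<gamma>" using g0 mult_left_le_one_le[of \<gamma> \<gamma>] by (simp add: power2_eq_square)
    then have "2 * \<gamma>\<^sup>2 / smin \<le> 2 * \<gamma> / smin" using smin0 by (simp add: divide_right_mono)
    then have "real k ^ 2 * (Cc * \<gamma> + 2 * \<gamma>\<^sup>2 / smin) \<le> real k ^ 2 * (Cc * \<gamma> + 2 * \<gamma> / smin)"
      by (intro mult_left_mono) auto
    also have "\<dots> = c0 * \<gamma>" by (simp add: c0_def field_simps)
    also have "\<dots> \<le> c0 * (\<delta> / (2 * c0))" using c00 by (intro mult_left_mono) (auto simp: \<gamma>_def)
    also have "\<dots> = \<delta> / 2" using c00 by simp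
    finally show ?thesis using \<delta> by linarith
  qed
  define K where "K = ln (real k) + 1"
  have ev: "eventually (\<lambda>n. 0 < n \<and> 0 < \<rho> n \<and> \<rho> n * smax \<le> 1/2 \<and> 2 \<le> min (\<alpha>s n) \<beta> * real n \<and>
      real n * K \<le> min (\<gamma>\<^sup>2 * \<rho> n * (real n)\<^sup>2 / (8 * smax)) (\<gamma> * \<rho> n * real n * (min (\<alpha>s n) \<beta> * real n - 1) / 4)) sequentially"
    by (rule asym_conds[OF \<rho>0 n\<rho> lim b0 g0 smax0 ap])
  define Bad where "Bad n = {x. \<not> goodN k n (\<lambda>c d. \<rho> n * S c d) \<gamma> (\<rho> n) (min (\<alpha>s n) \<beta>) \<beta> (fst x) (snd x)}" for n
  define A where "A n = (\<lambda>\<omega>. (Zs n \<omega>, As n \<omega>)) -` Bad n \<inter> space M" for n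
  have Asets: "A n \<in> sets M" for n unfolding A_def by (rule measurable_sets[OF meas[rule_format]]) simp
  have measA: "measure M (A n) = measure_pmf.prob (sbm_pmf \<pi> (\<lambda>a b. \<rho> n * S a b) n) (Bad n)" for n
  proof -
    have "measure M (A n) = measure (distr M (count_space UNIV) (\<lambda>\<omega>. (Zs n \<omega>, As n \<omega>))) (Bad n)"
      unfolding A_def by (rule measure_distr[symmetric, OF meas[rule_format]]) simp
    then show ?thesis using dis by simp
  qed
  define g where "g n = real k * exp (- (\<beta>\<^sup>2 / 8)) ^ n + 2 * real k ^ 2 * exp (- 1) ^ n" for n
  have sumg: "summable g"
    unfolding g_def using b0
    by (intro summable_add summable_mult summable_geometric) auto
  have evb: "eventually (\<lambda>n. norm (measure M (A n)) \<le> g n) sequentially"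
  proof (rule eventually_mono[OF ev])
    fix n assume H: "0 < n \<and> 0 < \<rho> n \<and> \<rho> n * smax \<le> 1/2 \<and> 2 \<le> min (\<alpha>s n) \<beta> * real n \<and>
      real n * K \<le> min (\<gamma>\<^sup>2 * \<rho> n * (real n)\<^sup>2 / (8 * smax)) (\<gamma> * \<rho> n * real n * (min (\<alpha>s n) \<beta> * real n - 1) / 4)"
    define h where "h = min (\<gamma>\<^sup>2 * \<rho> n * (real n)\<^sup>2 / (8 * smax)) (\<gamma> * \<rho> n * real n * (min (\<alpha>s n) \<beta> * real n - 1) / 4)"
    have bb: "measure M (A n) \<le> real k * exp (- (\<beta>\<^sup>2 / 8) * real n) + real (k ^ n * k * k) * (2 * exp (- h))"
      unfolding measA Bad_def h_def
      by (rule bad_bound[OF setpi b0 b1 bq _ _ smin0 Sb Ssym g0 _ smax0]) (use H in auto)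
    have e1: "exp (- (\<beta>\<^sup>2 / 8) * real n) = exp (- (\<beta>\<^sup>2 / 8)) ^ n"
      by (simp add: exp_of_nat_mult[symmetric] mult.commute)
    have e2: "real (k ^ n * k * k) * (2 * exp (- h)) \<le> 2 * real k ^ 2 * exp (- 1) ^ n"
    proof -
      have "exp (- h) \<le> exp (- (real n * K))" using H by (simp add: h_def)
      also have "\<dots> = exp (- real n * ln (real k)) * exp (- 1) ^ n"
        by (simp add: K_def exp_of_nat_mult[symmetric] algebra_simps exp_add[symmetric])
      also have "exp (- real n * ln (real k)) = inverse (real k ^ n)"
      proof -
        have "exp (real n * ln (real k)) = real k ^ n" using k0 by (simp add: exp_of_nat_mult)
        then show ?thesis by (simp add: exp_minus)
      qed
      finally have "exp (- h) \<le> inverse (real k ^ n) * exp (- 1) ^ n" .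
      then have "real k ^ n * exp (- h) \<le> real k ^ n * (inverse (real k ^ n) * exp (- 1) ^ n)"
        by (intro mult_left_mono) auto
      also have "\<dots> = exp (- 1) ^ n" using k0 by simp
      finally have "real k ^ n * exp (- h) \<le> exp (- 1) ^ n" .
      then have "2 * real k ^ 2 * (real k ^ n * exp (- h)) \<le> 2 * real k ^ 2 * exp (- 1) ^ n"
        by (intro mult_left_mono) auto
      then show ?thesis by (simp add: power2_eq_square mult_ac)
    qed
    have "measure M (A n) \<le> g n" using bb e2 unfolding g_def e1 by linarith
    then show "norm (measure M (A n)) \<le> g n" by simp
  qed
  have sumA: "summable (\<lambda>n. measure M (A n))" by (rule summable_comparison_test_ev[OF evb sumg])
  have BC: "AE \<omega> in M. eventually (\<lambda>n. \<omega> \<in> space M - A n) sequentially"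
    by (rule borel_cantelli_AE1[OF Asets _ sumA]) (simp add: emeasure_finite less_top[symmetric])
  show ?thesis
  proof (rule eventually_mono[OF BC])
    fix \<omega> assume ev\<omega>: "eventually (\<lambda>n. \<omega> \<in> space M - A n) sequentially"
    show "eventually (\<lambda>n. \<forall>e. (is_ML_est k (\<alpha>s n) n (As n \<omega>) e \<or> is_ICL_est k (\<alpha>s n) n (As n \<omega>) e) \<longrightarrow>
             \<bar>Xfun k n (\<lambda>a b. \<rho> n * S a b) (As n \<omega>) e (Zs n \<omega>)
              - Xfun k n (\<lambda>a b. \<rho> n * S a b) (As n \<omega>) (Zs n \<omega>) (Zs n \<omega>)\<bar> < \<delta> * \<rho> n) sequentially"
    proof (rule eventually_mono[OF eventually_conj[OF ev ev\<omega>]])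
      fix n assume H: "(0 < n \<and> 0 < \<rho> n \<and> \<rho> n * smax \<le> 1/2 \<and> 2 \<le> min (\<alpha>s n) \<beta> * real n \<and>
        real n * K \<le> min (\<gamma>\<^sup>2 * \<rho> n * (real n)\<^sup>2 / (8 * smax)) (\<gamma> * \<rho> n * real n * (min (\<alpha>s n) \<beta> * real n - 1) / 4))
        \<and> \<omega> \<in> space M - A n"
      then have G: "goodN k n (\<lambda>c d. \<rho> n * S c d) \<gamma> (\<rho> n) (min (\<alpha>s n) \<beta>) \<beta> (Zs n \<omega>) (As n \<omega>)"
        by (auto simp: A_def Bad_def)
      show "\<forall>e. (is_ML_est k (\<alpha>s n) n (As n \<omega>) e \<or> is_ICL_est k (\<alpha>s n) n (As n \<omega>) e) \<longrightarrow>
             \<bar>Xfun k n (\<lambda>a b. \<rho> n * S a b) (As n \<omega>) e (Zs n \<omega>)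
              - Xfun k n (\<lambda>a b. \<rho> n * S a b) (As n \<omega>) (Zs n \<omega>) (Zs n \<omega>)\<bar> < \<delta> * \<rho> n"
      proof (intro allI impI)
        fix e assume "is_ML_est k (\<alpha>s n) n (As n \<omega>) e \<or> is_ICL_est k (\<alpha>s n) n (As n \<omega>) e"
        then have eF: "e \<in> Fset k n (\<alpha>s n)" by (auto simp: is_ML_est_def is_ICL_est_def)
        have "\<bar>Xfun k n (\<lambda>a b. \<rho> n * S a b) (As n \<omega>) e (Zs n \<omega>)
              - Xfun k n (\<lambda>a b. \<rho> n * S a b) (As n \<omega>) (Zs n \<omega>) (Zs n \<omega>)\<bar>
            \<le> real k ^ 2 * \<rho> n * (Cc * \<gamma> + 2 * \<gamma>\<^sup>2 / smin)"
          unfolding Cc_def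
          by (rule final_step[OF G _ _ _ _ _ smin0 Sb _ eF]) (use H g0 in auto)
        also have "\<dots> = \<rho> n * (real k ^ 2 * (Cc * \<gamma> + 2 * \<gamma>\<^sup>2 / smin))" by (simp add: mult_ac)
        also have "\<dots> < \<rho> n * \<delta>" using H gle by (intro mult_strict_left_mono) auto
        finally show "\<bar>Xfun k n (\<lambda>a b. \<rho> n * S a b) (As n \<omega>) e (Zs n \<omega>)
              - Xfun k n (\<lambda>a b. \<rho> n * S a b) (As n \<omega>) (Zs n \<omega>) (Zs n \<omega>)\<bar> < \<delta> * \<rho> n"
          by (simp add: mult.commute)
      qed
    qed
  qed
qed

theorem theorem5:
  fixes M :: "'w measure"
    and k :: nat and \<pi> :: "nat pmf" and S :: "nat \<Rightarrow> nat \<Rightarrow> real" and \<rho> :: "nat \<Rightarrow> real"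
    and Zs :: "nat \<Rightarrow> 'w \<Rightarrow> (nat \<Rightarrow> nat)" and As :: "nat \<Rightarrow> 'w \<Rightarrow> (nat \<Rightarrow> nat \<Rightarrow> bool)"
  assumes "prob_space M"
    and "k \<ge> 2"
    and "set_pmf \<pi> = {0..<k}"
    and "\<forall>a<k. \<forall>b<k. S a b = S b a"
    and "\<forall>a<k. \<forall>b<k. S a b > 0"
    and "\<forall>a<k. \<forall>b<k. a \<noteq> b \<longrightarrow> (\<exists>c<k. S c a \<noteq> S c b)"
    and "\<rho> \<longlonglongrightarrow> 0"
    and "filterlim (\<lambda>n. real n * \<rho> n) at_top sequentially"
    and "\<forall>n. (\<lambda>\<omega>. (Zs n \<omega>, As n \<omega>)) \<in> M \<rightarrow>\<^sub>M count_space UNIV"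
    and "\<forall>n. distr M (count_space UNIV) (\<lambda>\<omega>. (Zs n \<omega>, As n \<omega>))
              = measure_pmf (sbm_pmf \<pi> (\<lambda>a b. \<rho> n * S a b) n)"
  shows
    "(\<forall>\<alpha> \<delta>. 0 < \<alpha> \<longrightarrow> \<alpha> < Min (pmf \<pi> ` {0..<k}) \<longrightarrow> 0 < \<delta> \<longrightarrow>
        (AE \<omega> in M. eventually (\<lambda>n.
           \<forall>e. (is_ML_est k \<alpha> n (As n \<omega>) e \<or> is_ICL_est k \<alpha> n (As n \<omega>) e) \<longrightarrow>
             \<bar>Xfun k n (\<lambda>a b. \<rho> n * S a b) (As n \<omega>) e (Zs n \<omega>)
              - Xfun k n (\<lambda>a b. \<rho> n * S a b) (As n \<omega>) (Zs n \<omega>) (Zs n \<omega>)\<bar> < \<delta> * \<rho> n)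
         sequentially))
     \<and>
     (\<forall>\<alpha>s :: nat \<Rightarrow> real. \<forall>\<delta>. (\<forall>n. 0 < \<alpha>s n \<and> \<alpha>s n < Min (pmf \<pi> ` {0..<k})) \<longrightarrow>
        antimono \<alpha>s \<longrightarrow> 0 < \<delta> \<longrightarrow>
        eventually (\<lambda>n. real n * \<rho> n >
            4 * Max {S a b | a b. a < k \<and> b < k} / (\<alpha>s n ^ 2 * \<delta> ^ 2)) sequentially \<longrightarrow>
        (AE \<omega> in M. eventually (\<lambda>n.
           \<forall>e. (is_ML_est k (\<alpha>s n) n (As n \<omega>) e \<or> is_ICL_est k (\<alpha>s n) n (As n \<omega>) e) \<longrightarrow>
             \<bar>Xfun k n (\<lambda>a b. \<rho> n * S a b) (As n \<omega>) e (Zs n \<omega>)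
              - Xfun k n (\<lambda>a b. \<rho> n * S a b) (As n \<omega>) (Zs n \<omega>) (Zs n \<omega>)\<bar> < \<delta> * \<rho> n)
         sequentially))"
proof -
  note A = assms
  have k0: "0 < k" using assms(2) by simp
  show ?thesis
  proof (intro conjI allI impI)
    fix \<alpha> \<delta> :: real
    assume a0: "0 < \<alpha>" and "\<alpha> < Min (pmf \<pi> ` {0..<k})" and d0: "0 < \<delta>"
    have lim: "filterlim (\<lambda>n. (\<lambda>_. \<alpha>) n * (real n * \<rho> n)) at_top sequentially"
      by (rule filterlim_tendsto_pos_mult_at_top[OF tendsto_const a0 assms(8)])
    show "AE \<omega> in M. eventually (\<lambda>n.
           \<forall>e. (is_ML_est k \<alpha> n (As n \<omega>) e \<or> is_ICL_est k \<alpha> n (As n \<omega>) e) \<longrightarrow>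
             \<bar>Xfun k n (\<lambda>a b. \<rho> n * S a b) (As n \<omega>) e (Zs n \<omega>)
              - Xfun k n (\<lambda>a b. \<rho> n * S a b) (As n \<omega>) (Zs n \<omega>) (Zs n \<omega>)\<bar> < \<delta> * \<rho> n)
         sequentially"
      using main_gen[OF assms(1,2,3,4,5,7,8,9,10), of "\<lambda>_. \<alpha>" \<delta>] a0 lim d0 by simp
  next
    fix \<alpha>s :: "nat \<Rightarrow> real" and \<delta> :: real
    assume H1: "\<forall>n. 0 < \<alpha>s n \<and> \<alpha>s n < Min (pmf \<pi> ` {0..<k})" and "antimono \<alpha>s" and d0: "0 < \<delta>"
      and EV: "eventually (\<lambda>n. real n * \<rho> n >
            4 * Max {S a b | a b. a < k \<and> b < k} / (\<alpha>s n ^ 2 * \<delta> ^ 2)) sequentially"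
    define smax where "smax = Max {S a b | a b. a < k \<and> b < k}"
    have finSS: "finite {S a b | a b. a < k \<and> b < k}"
    proof -
      have "{S a b | a b. a < k \<and> b < k} = (\<lambda>(a,b). S a b) ` ({..<k} \<times> {..<k})" by auto
      then show ?thesis by simp
    qed
    have "S 0 0 \<le> smax" unfolding smax_def using k0 by (intro Max_ge[OF finSS]) auto
    then have smax0: "smax > 0" using assms(5) k0 by (meson order.strict_trans2)
    define c where "c = 4 * smax / \<delta>\<^sup>2"
    have c0: "c > 0" using smax0 d0 by (simp add: c_def)
    have ap: "\<forall>n. 0 < \<alpha>s n" using H1 by simp
    have lim: "filterlim (\<lambda>n. \<alpha>s n * (real n * \<rho> n)) at_top sequentially"
      unfolding filterlim_at_top
    proof
      fix Z :: real
      define Y where "Y = max Z 0"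
      have e1: "eventually (\<lambda>n. Y\<^sup>2 / c \<le> real n * \<rho> n) sequentially"
        using assms(8) by (simp add: filterlim_at_top)
      show "eventually (\<lambda>n. Z \<le> \<alpha>s n * (real n * \<rho> n)) sequentially"
      proof (rule eventually_mono[OF eventually_conj[OF e1 EV]])
        fix n assume Hn: "Y\<^sup>2 / c \<le> real n * \<rho> n \<and> 4 * Max {S a b | a b. a < k \<and> b < k} / (\<alpha>s n ^ 2 * \<delta> ^ 2) < real n * \<rho> n"
        define x where "x = real n * \<rho> n"
        define a where "a = \<alpha>s n"
        have a0: "a > 0" using ap by (simp add: a_def)
        have x1: "c / a\<^sup>2 < x" using Hn by (simp add: x_def a_def c_def smax_def field_simps)
        have x0: "0 < x" using x1 c0 a0 by (smt (verit) divide_pos_pos zero_less_power)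
        have ax: "c < a\<^sup>2 * x" using x1 a0 by (simp add: field_simps)
        have xY: "Y\<^sup>2 / c \<le> x" using Hn by (simp add: x_def)
        have "Y\<^sup>2 = c * (Y\<^sup>2 / c)" using c0 by simp
        also have "\<dots> \<le> (a\<^sup>2 * x) * x" using ax xY c0 by (intro mult_mono) auto
        also have "\<dots> = (a * x)\<^sup>2" by (simp add: power2_eq_square)
        finally have Y2: "Y\<^sup>2 \<le> (a * x)\<^sup>2" .
        have "0 \<le> a * x" using a0 x0 by simp
        with Y2 have "Y \<le> a * x" by (rule power2_le_imp_le)
        then show "Z \<le> \<alpha>s n * (real n * \<rho> n)" unfolding Y_def a_def x_def by simp
      qed
    qed
    show "AE \<omega> in M. eventually (\<lambda>n.
           \<forall>e. (is_ML_est k (\<alpha>s n) n (As n \<omega>) e \<or> is_ICL_est k (\<alpha>s n) n (As n \<omega>) e) \<longrightarrow>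
             \<bar>Xfun k n (\<lambda>a b. \<rho> n * S a b) (As n \<omega>) e (Zs n \<omega>)
              - Xfun k n (\<lambda>a b. \<rho> n * S a b) (As n \<omega>) (Zs n \<omega>) (Zs n \<omega>)\<bar> < \<delta> * \<rho> n)
         sequentially"
      by (rule main_gen[OF assms(1,2,3,4,5,7,8,9,10) ap lim d0])
  qed
qed

end
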